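(* Let $\rho$ be a state on $\mathbb{C}^M\otimes\mathbb{C}^N$, fix an orthonormal basis $\{|f_n\rangle\}$ of $\mathbb{C}^N$ and a positive integer $K$ such that $\rho$ admits a decomposition into $K$ rank-one terms. The following are equivalent: (a) $\rho$ is $K$-separable; (b) there is an orthonormal basis $\{|e_m\rangle\}$ of $\mathbb{C}^M$ such that for every decomposition $\rho=\sum_{l=1}^K|\Phi_l\rangle\langle\Phi_l|$, with Gram vectors $w''_{mn}\in\mathbb{C}^K$, $w''^{\,l}_{mn}=\langle\Phi_l|e_m\otimes f_n\rangle$, there exist $K\times K$ matrices $M_{mk}$ ($m,k=1,\dots,M$), each normal and all pairwise commuting, such that $M_{mk}w''_{kn}=w''_{mn}$ for all $m,k\in\{1,\dots,M\}$, $n\in\{1,\dots,N\}$; (c) for some orthonormal basis $\{|e_m\rangle\}$ of $\mathbb{C}^M$ and some decomposition $\rho=\sum_{l=1}^K|\Phi_l\rangle\langle\Phi_l|$, there exist pairwise commuting normal $K\times K$ matrices $M_{mk}$ with $M_{mk}w''_{kn}=w''_{mn}$ for all $m,k,n$, where $w''_{mn}$ are defined as in (b).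
   Context: A state $\rho$ is $K$-separable if $\rho=\sum_{l=1}^K|\varphi_l\otimes\psi_l\rangle\langle\varphi_l\otimes\psi_l|$ for some vectors $|\varphi_l\rangle\in\mathbb{C}^M$, $|\psi_l\rangle\in\mathbb{C}^N$ (a decomposition into $K$ rank-one product terms). A matrix $X$ is normal if $XX^\dagger=X^\dagger X$. *)

theory Defs
  imports "HOL-Analysis.Analysis"
begin

text \<open>A vector of C^M is a function v :: nat => complex, only the
  components v i with i < M matter. A vector of C^M (x) C^N is a function
  Phi :: nat => nat => complex, Phi i j being the coefficient of the standard
  product basis vector |i> (x) |j> (i < M, j < N). An operator rho on
  C^M (x) C^N is given by its matrix entries rho i j i' j' = <i j| rho |i' j'>.
  A K x K matrix is a function X :: nat => nat => complex (indices < K).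
  A family of K vectors Phi_1..Phi_K is indexed by l < K.\<close>

definition is_state :: "nat \<Rightarrow> nat \<Rightarrow> (nat \<Rightarrow> nat \<Rightarrow> nat \<Rightarrow> nat \<Rightarrow> complex) \<Rightarrow> bool" where
  "is_state M N \<rho> \<longleftrightarrow>
     (\<forall>i<M. \<forall>j<N. \<forall>i'<M. \<forall>j'<N. \<rho> i j i' j' = cnj (\<rho> i' j' i j)) \<and>
     (\<forall>v :: nat \<Rightarrow> nat \<Rightarrow> complex.
        (\<Sum>i<M. \<Sum>j<N. \<Sum>i'<M. \<Sum>j'<N. cnj (v i j) * \<rho> i j i' j' * v i' j') \<in> \<real> \<and>
        0 \<le> Re (\<Sum>i<M. \<Sum>j<N. \<Sum>i'<M. \<Sum>j'<N. cnj (v i j) * \<rho> i j i' j' * v i' j')) \<and>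
     (\<Sum>i<M. \<Sum>j<N. \<rho> i j i j) = 1"

definition is_decomp :: "nat \<Rightarrow> nat \<Rightarrow> nat \<Rightarrow> (nat \<Rightarrow> nat \<Rightarrow> nat \<Rightarrow> nat \<Rightarrow> complex)
    \<Rightarrow> (nat \<Rightarrow> nat \<Rightarrow> nat \<Rightarrow> complex) \<Rightarrow> bool" where
  "is_decomp M N K \<rho> \<Phi> \<longleftrightarrow>
     (\<forall>i<M. \<forall>j<N. \<forall>i'<M. \<forall>j'<N. \<rho> i j i' j' = (\<Sum>l<K. \<Phi> l i j * cnj (\<Phi> l i' j')))"

definition K_separable :: "nat \<Rightarrow> nat \<Rightarrow> nat \<Rightarrow> (nat \<Rightarrow> nat \<Rightarrow> nat \<Rightarrow> nat \<Rightarrow> complex) \<Rightarrow> bool" where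
  "K_separable M N K \<rho> \<longleftrightarrow>
     (\<exists>(\<phi> :: nat \<Rightarrow> nat \<Rightarrow> complex) (\<psi> :: nat \<Rightarrow> nat \<Rightarrow> complex).
        is_decomp M N K \<rho> (\<lambda>l i j. \<phi> l i * \<psi> l j))"

text \<open>e_0..e_{M-1} (e m i = i-th coordinate of e_m) is an orthonormal basis of C^M\<close>
definition is_onb :: "nat \<Rightarrow> (nat \<Rightarrow> nat \<Rightarrow> complex) \<Rightarrow> bool" where
  "is_onb M e \<longleftrightarrow> (\<forall>m<M. \<forall>k<M. (\<Sum>i<M. cnj (e m i) * e k i) = (if m = k then 1 else 0))"

definition gram_vec :: "nat \<Rightarrow> nat \<Rightarrow> (nat \<Rightarrow> nat \<Rightarrow> nat \<Rightarrow> complex) \<Rightarrow> (nat \<Rightarrow> nat \<Rightarrow> complex)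
    \<Rightarrow> (nat \<Rightarrow> nat \<Rightarrow> complex) \<Rightarrow> nat \<Rightarrow> nat \<Rightarrow> nat \<Rightarrow> complex" where
  "gram_vec M N \<Phi> e f l m n = (\<Sum>i<M. \<Sum>j<N. cnj (\<Phi> l i j) * e m i * f n j)"

definition kmat_mult :: "nat \<Rightarrow> (nat \<Rightarrow> nat \<Rightarrow> complex) \<Rightarrow> (nat \<Rightarrow> nat \<Rightarrow> complex) \<Rightarrow> nat \<Rightarrow> nat \<Rightarrow> complex" where
  "kmat_mult K X Y i k = (\<Sum>j<K. X i j * Y j k)"

definition kmat_adjoint :: "(nat \<Rightarrow> nat \<Rightarrow> complex) \<Rightarrow> nat \<Rightarrow> nat \<Rightarrow> complex" where
  "kmat_adjoint X i k = cnj (X k i)"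

definition kmat_normal :: "nat \<Rightarrow> (nat \<Rightarrow> nat \<Rightarrow> complex) \<Rightarrow> bool" where
  "kmat_normal K X \<longleftrightarrow>
     (\<forall>i<K. \<forall>k<K. kmat_mult K X (kmat_adjoint X) i k = kmat_mult K (kmat_adjoint X) X i k)"

definition kmat_commute :: "nat \<Rightarrow> (nat \<Rightarrow> nat \<Rightarrow> complex) \<Rightarrow> (nat \<Rightarrow> nat \<Rightarrow> complex) \<Rightarrow> bool" where
  "kmat_commute K X Y \<longleftrightarrow> (\<forall>i<K. \<forall>k<K. kmat_mult K X Y i k = kmat_mult K Y X i k)"

definition gram_condition :: "nat \<Rightarrow> nat \<Rightarrow> nat \<Rightarrow> (nat \<Rightarrow> nat \<Rightarrow> nat \<Rightarrow> complex)
    \<Rightarrow> (nat \<Rightarrow> nat \<Rightarrow> complex) \<Rightarrow> (nat \<Rightarrow> nat \<Rightarrow> complex) \<Rightarrow> bool" where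
  "gram_condition M N K \<Phi> e f \<longleftrightarrow>
     (\<exists>Mat :: nat \<Rightarrow> nat \<Rightarrow> nat \<Rightarrow> nat \<Rightarrow> complex.
        (\<forall>m<M. \<forall>k<M. kmat_normal K (Mat m k)) \<and>
        (\<forall>m<M. \<forall>k<M. \<forall>m'<M. \<forall>k'<M. kmat_commute K (Mat m k) (Mat m' k')) \<and>
        (\<forall>m<M. \<forall>k<M. \<forall>n<N. \<forall>l<K.
           (\<Sum>j<K. Mat m k l j * gram_vec M N \<Phi> e f j k n) = gram_vec M N \<Phi> e f l m n))"

end

theory Submission
  imports Defs "Jordan_Normal_Form.Char_Poly" "Jordan_Normal_Form.Determinant"
begin

definition ip :: "nat \<Rightarrow> (nat\<Rightarrow>complex) \<Rightarrow> (nat\<Rightarrow>complex) \<Rightarrow> complex" where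
  "ip K x y = (\<Sum>i<K. cnj (x i) * y i)"

definition mv :: "nat \<Rightarrow> (nat\<Rightarrow>nat\<Rightarrow>complex) \<Rightarrow> (nat\<Rightarrow>complex) \<Rightarrow> nat \<Rightarrow> complex" where
  "mv K A x = (\<lambda>i. \<Sum>j<K. A i j * x j)"

definition unitary :: "nat \<Rightarrow> (nat\<Rightarrow>nat\<Rightarrow>complex) \<Rightarrow> bool" where
  "unitary K U \<longleftrightarrow> (\<forall>i<K. \<forall>j<K. (\<Sum>k<K. cnj (U k i) * U k j) = (if i = j then 1 else 0))"

definition idm :: "nat \<Rightarrow> nat \<Rightarrow> complex" where
  "idm i j = (if i = j then 1 else 0)"

definition meq :: "nat \<Rightarrow> (nat\<Rightarrow>nat\<Rightarrow>complex) \<Rightarrow> (nat\<Rightarrow>nat\<Rightarrow>complex) \<Rightarrow> bool" where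
  "meq K X Y \<longleftrightarrow> (\<forall>i<K. \<forall>j<K. X i j = Y i j)"

lemma left_right_inv:
  fixes X Y :: "nat \<Rightarrow> nat \<Rightarrow> complex"
  assumes "\<forall>i<K. \<forall>j<K. (\<Sum>k<K. X i k * Y k j) = (if i = j then 1 else 0)"
  shows "\<forall>i<K. \<forall>j<K. (\<Sum>k<K. Y i k * X k j) = (if i = j then 1 else 0)"
proof -
  let ?A = "mat K K (\<lambda>(i,j). X i j)"
  let ?B = "mat K K (\<lambda>(i,j). Y i j)"
  have A: "?A \<in> carrier_mat K K" and B: "?B \<in> carrier_mat K K" by auto
  have "?A * ?B = 1\<^sub>m K"
    using assms by (auto simp: scalar_prod_def atLeast0LessThan intro!: eq_matI)
  from mat_mult_left_right_inverse[OF A B this] have "?B * ?A = 1\<^sub>m K" .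
  note eq = this
  show ?thesis
  proof (intro allI impI)
    fix i j assume ij: "i < K" "j < K"
    have "(?B * ?A) $$ (i,j) = 1\<^sub>m K $$ (i,j)" using eq by simp
    then show "(\<Sum>k<K. Y i k * X k j) = (if i = j then 1 else 0)"
      using ij by (simp add: scalar_prod_def atLeast0LessThan)
  qed
qed

lemma unitary_rows:
  assumes "unitary K U" "i < K" "j < K"
  shows "(\<Sum>k<K. U i k * cnj (U j k)) = (if i = j then 1 else 0)"
proof -
  have "\<forall>i<K. \<forall>j<K. (\<Sum>k<K. (\<lambda>i k. cnj (U k i)) i k * U k j) = (if i = j then 1 else 0)"
    using assms(1) unfolding unitary_def by simp
  from left_right_inv[OF this] assms(2,3) show ?thesis by simp
qed

lemma sum_delta_left: assumes "j < (K::nat)" shows "(\<Sum>k<K. (if j = k then 1 else 0) * f k) = (f j :: complex)"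
proof -
  have "(\<Sum>k<K. (if j = k then 1 else 0) * f k) = (\<Sum>k<K. if j = k then f k else 0)"
    by (rule sum.cong) auto
  also have "\<dots> = f j" using assms by (subst sum.delta') auto
  finally show ?thesis .
qed

lemma sum_delta_right: assumes "j < (K::nat)" shows "(\<Sum>k<K. f k * (if k = j then 1 else 0)) = (f j :: complex)"
proof -
  have "(\<Sum>k<K. f k * (if k = j then 1 else 0)) = (\<Sum>k<K. if k = j then f k else 0)"
    by (rule sum.cong) auto
  also have "\<dots> = f j" using assms by (subst sum.delta) auto
  finally show ?thesis .
qed

lemma sum_delta_right': assumes "j < (K::nat)" shows "(\<Sum>k<K. f k * (if j = k then 1 else 0)) = (f j :: complex)"
proof -
  have "(\<Sum>k<K. f k * (if j = k then 1 else 0)) = (\<Sum>k<K. if j = k then f k else 0)"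
    by (rule sum.cong) auto
  also have "\<dots> = f j" using assms by (subst sum.delta') auto
  finally show ?thesis .
qed

lemma ip_cong: "(\<forall>i<K. x i = x' i) \<Longrightarrow> (\<forall>i<K. y i = y' i) \<Longrightarrow> ip K x y = ip K x' y'"
  unfolding ip_def by (rule sum.cong) auto

lemma mv_cong: "(\<forall>j<K. x j = x' j) \<Longrightarrow> mv K A x i = mv K A x' i"
  unfolding mv_def by (rule sum.cong) auto

lemma ip_cnj: "ip K x y = cnj (ip K y x)"
  unfolding ip_def by (simp add: mult.commute)

lemma ip_self: "ip K u u = complex_of_real (\<Sum>i<K. (cmod (u i))^2)"
  unfolding ip_def of_real_sum
  by (rule sum.cong) (simp_all add: complex_norm_square mult.commute del: of_real_power)

lemma ip_self_zero: assumes "ip K u u = 0" "i < K" shows "u i = 0"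
proof -
  have "complex_of_real (\<Sum>i<K. (cmod (u i))^2) = 0" using assms(1) ip_self by metis
  then have "(\<Sum>i<K. (cmod (u i))^2) = 0" by (simp only: of_real_eq_0_iff)
  then have "(cmod (u i))^2 = 0" using assms(2) by (simp add: sum_nonneg_eq_0_iff)
  then show ?thesis by simp
qed

lemma ip_self_real: "ip K u u = complex_of_real (Re (ip K u u))" "Re (ip K u u) \<ge> 0"
  unfolding ip_self by (auto intro: sum_nonneg)

lemma ip_diff_left: "ip K (\<lambda>i. x i - y i) z = ip K x z - ip K y z"
  unfolding ip_def by (simp add: sum_subtractf algebra_simps)

lemma mv_mv: "mv K A (mv K B x) i = (\<Sum>k<K. (\<Sum>j<K. A i j * B j k) * x k)"
proof -
  have "mv K A (mv K B x) i = (\<Sum>j<K. \<Sum>k<K. A i j * B j k * x k)"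
    unfolding mv_def by (simp add: sum_distrib_left mult.assoc)
  also have "\<dots> = (\<Sum>k<K. \<Sum>j<K. A i j * B j k * x k)" by (rule sum.swap)
  also have "\<dots> = (\<Sum>k<K. (\<Sum>j<K. A i j * B j k) * x k)" by (simp add: sum_distrib_right)
  finally show ?thesis .
qed

lemma unitary_ip:
  assumes "unitary K U"
  shows "ip K (mv K U x) (mv K U y) = ip K x y"
proof -
  have "ip K (mv K U x) (mv K U y) = (\<Sum>i<K. (\<Sum>j<K. cnj (U i j) * cnj (x j)) * (\<Sum>k<K. U i k * y k))"
    unfolding ip_def mv_def by (simp add: cnj_sum)
  also have "\<dots> = (\<Sum>i<K. \<Sum>j<K. \<Sum>k<K. cnj (x j) * y k * (cnj (U i j) * U i k))"
    unfolding sum_product by (intro sum.cong refl) (simp add: algebra_simps)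
  also have "\<dots> = (\<Sum>j<K. \<Sum>i<K. \<Sum>k<K. cnj (x j) * y k * (cnj (U i j) * U i k))"
    by (rule sum.swap)
  also have "\<dots> = (\<Sum>j<K. \<Sum>k<K. \<Sum>i<K. cnj (x j) * y k * (cnj (U i j) * U i k))"
    by (rule sum.cong[OF refl], rule sum.swap)
  also have "\<dots> = (\<Sum>j<K. \<Sum>k<K. cnj (x j) * y k * (\<Sum>i<K. cnj (U i j) * U i k))"
    by (simp add: sum_distrib_left)
  also have "\<dots> = (\<Sum>j<K. \<Sum>k<K. cnj (x j) * y k * (if j = k then 1 else 0))"
    using assms unfolding unitary_def by (intro sum.cong refl) auto
  also have "\<dots> = ip K x y"
    unfolding ip_def by (intro sum.cong refl) (rule sum_delta_right', simp)
  finally show ?thesis .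
qed

lemma unitary_id: "unitary K idm"
  unfolding unitary_def
proof (intro allI impI)
  fix i j assume ij: "i < K" "j < K"
  have "(\<Sum>k<K. cnj (idm k i) * idm k j) = (\<Sum>k<K. (if i = k then 1 else 0) * idm k j)"
    by (rule sum.cong) (auto simp: idm_def)
  also have "\<dots> = idm i j" using sum_delta_left[OF ij(1)] .
  finally show "(\<Sum>k<K. cnj (idm k i) * idm k j) = (if i = j then 1 else 0)" by (simp add: idm_def)
qed

lemma mv_idm: "i < K \<Longrightarrow> mv K idm x i = x i"
  unfolding mv_def idm_def by (simp add: sum_delta_left)

lemma unitary_mm:
  assumes "unitary K R" "unitary K U"
  shows "unitary K (kmat_mult K R U)"
  unfolding unitary_def
proof (intro allI impI)
  fix i j assume ij: "i < K" "j < K"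
  have "(\<Sum>k<K. cnj (kmat_mult K R U k i) * kmat_mult K R U k j)
     = ip K (mv K R (\<lambda>k. U k i)) (mv K R (\<lambda>k. U k j))"
    unfolding ip_def mv_def kmat_mult_def by simp
  also have "\<dots> = ip K (\<lambda>k. U k i) (\<lambda>k. U k j)" using unitary_ip[OF assms(1)] .
  also have "\<dots> = (if i = j then 1 else 0)" using assms(2) ij unfolding unitary_def ip_def by simp
  finally show "(\<Sum>k<K. cnj (kmat_mult K R U k i) * kmat_mult K R U k j) = (if i = j then 1 else 0)" .
qed

lemma mv_mm: "mv K (kmat_mult K A B) x i = mv K A (mv K B x) i"
  unfolding mv_mv unfolding mv_def kmat_mult_def by simp

lemma unitary_complete:
  assumes "unitary K U" "i < K"
  shows "(\<Sum>a<K. ip K (\<lambda>k. U k a) z * U i a) = z i"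
proof -
  have "(\<Sum>a<K. ip K (\<lambda>k. U k a) z * U i a) = (\<Sum>a<K. \<Sum>k<K. z k * (U i a * cnj (U k a)))"
    unfolding ip_def by (simp add: sum_distrib_right sum_distrib_left algebra_simps)
  also have "\<dots> = (\<Sum>k<K. \<Sum>a<K. z k * (U i a * cnj (U k a)))" by (rule sum.swap)
  also have "\<dots> = (\<Sum>k<K. z k * (\<Sum>a<K. U i a * cnj (U k a)))"
    by (simp add: sum_distrib_left)
  also have "\<dots> = (\<Sum>k<K. z k * (if i = k then 1 else 0))"
    using unitary_rows[OF assms(1) assms(2)] by (intro sum.cong refl) auto
  also have "\<dots> = z i" using assms(2) by (simp add: if_distrib sum.delta' cong: if_cong)
  finally show ?thesis .
qed

lemma refl_unitary:
  assumes xy: "ip K x x = ip K y y" and ne: "\<exists>i<K. x i \<noteq> y i"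
  shows "\<exists>R. unitary K R \<and> (\<forall>i<K. mv K R x i = y i)
      \<and> (\<forall>z. ip K (\<lambda>i. x i - y i) z = 0 \<longrightarrow> (\<forall>i<K. mv K R z i = z i))"
proof -
  define u where "u = (\<lambda>i. x i - y i)"
  define a where "a = ip K u x"
  have uu: "ip K u u = a + cnj a"
  proof -
    have "a + cnj a - ip K u u = (\<Sum>i<K. cnj (u i) * x i + u i * cnj (x i) - cnj (u i) * u i)"
      unfolding a_def ip_def by (simp add: sum.distrib sum_subtractf cnj_sum)
    also have "\<dots> = (\<Sum>i<K. cnj (x i) * x i - cnj (y i) * y i)"
      unfolding u_def by (rule sum.cong) (simp_all add: algebra_simps)
    also have "\<dots> = ip K x x - ip K y y" unfolding ip_def by (simp add: sum_subtractf)
    finally show ?thesis using xy by simp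
  qed
  have a0: "a \<noteq> 0"
  proof
    assume "a = 0"
    then have "ip K u u = 0" using uu by simp
    then have "\<forall>i<K. u i = 0" using ip_self_zero by blast
    then show False using ne unfolding u_def by auto
  qed
  define c where "c = 1 / a"
  define R where "R = (\<lambda>i j. (if i = j then 1 else 0) - c * u i * cnj (u j))"
  have Rz: "mv K R z i = z i - c * u i * ip K u z" if "i < K" for z i
  proof -
    have "mv K R z i = (\<Sum>j<K. (if i = j then 1 else 0) * z j) - (\<Sum>j<K. c * u i * (cnj (u j) * z j))"
      unfolding mv_def R_def by (simp add: sum_subtractf algebra_simps)
    also have "\<dots> = z i - c * u i * ip K u z"
      using that unfolding ip_def by (simp add: sum_delta_left sum_distrib_left)
    finally show ?thesis .
  qed
  have "unitary K R"
    unfolding unitary_def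
  proof (intro allI impI)
    fix i j assume ij: "i < K" "j < K"
    have Rc: "cnj (R k i) = (if i = k then 1 else 0) - cnj c * cnj (u k) * u i" for k
      unfolding R_def by auto
    have "(\<Sum>k<K. cnj (R k i) * R k j)
       = (\<Sum>k<K. (if i = k then 1 else 0) * (if k = j then 1 else 0)
         - (if i = k then 1 else 0) * (c * u k * cnj (u j))
         - (cnj c * cnj (u k) * u i) * (if k = j then 1 else 0)
         + (cnj c * c * u i * cnj (u j)) * (cnj (u k) * u k))"
      unfolding Rc by (rule sum.cong) (simp_all add: R_def algebra_simps)
    also have "\<dots> = (\<Sum>k<K. (if i = k then 1 else 0) * (if k = j then 1 else 0))
         - (\<Sum>k<K. (if i = k then 1 else 0) * (c * u k * cnj (u j)))
         - (\<Sum>k<K. (cnj c * cnj (u k) * u i) * (if k = j then 1 else 0))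
         + cnj c * c * u i * cnj (u j) * (\<Sum>k<K. cnj (u k) * u k)"
      by (simp only: sum.distrib sum_subtractf sum_distrib_left)
    also have "\<dots> = (if i = j then 1 else 0) - c * u i * cnj (u j) - cnj c * cnj (u j) * u i
         + cnj c * c * u i * cnj (u j) * ip K u u"
      using ij unfolding ip_def
      by (simp only: sum_delta_left[OF ij(1)] sum_delta_right[OF ij(2)])
    also have "\<dots> = (if i = j then 1 else 0) + u i * cnj (u j) * (cnj c * c * ip K u u - c - cnj c)"
      by (simp add: algebra_simps)
    also have "cnj c * c * ip K u u - c - cnj c = 0"
      unfolding uu c_def using a0 by (simp add: field_simps)
    finally show "(\<Sum>k<K. cnj (R k i) * R k j) = (if i = j then 1 else 0)" by simp
  qed
  moreover have "\<forall>i<K. mv K R x i = y i"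
  proof (intro allI impI)
    fix i assume i: "i < K"
    then have "mv K R x i = x i - c * u i * a" using Rz a_def by simp
    also have "\<dots> = x i - u i" using a0 c_def by simp
    finally show "mv K R x i = y i" by (simp add: u_def)
  qed
  moreover have "\<forall>z. ip K u z = 0 \<longrightarrow> (\<forall>i<K. mv K R z i = z i)"
    using Rz by simp
  ultimately show ?thesis unfolding u_def by blast
qed


lemma ip_basis: assumes "j < K" shows "ip K (\<lambda>i. if i = j then 1 else 0) y = y j"
proof -
  have "ip K (\<lambda>i. if i = j then 1 else 0) y = (\<Sum>i<K. y i * (if i = j then 1 else 0))"
    unfolding ip_def by (rule sum.cong) auto
  also have "\<dots> = y j" by (rule sum_delta_right[OF assms])
  finally show ?thesis .
qed

lemma mv_basis: "j < K \<Longrightarrow> mv K A (\<lambda>i. if i = j then 1 else 0) i' = A i' j"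
  unfolding mv_def by (rule sum_delta_right)

lemma ip_lincomb_right: "ip K x (\<lambda>i. \<Sum>a\<in>A. c a * y a i) = (\<Sum>a\<in>A. c a * ip K x (y a))"
proof -
  have "ip K x (\<lambda>i. \<Sum>a\<in>A. c a * y a i) = (\<Sum>i<K. \<Sum>a\<in>A. c a * (cnj (x i) * y a i))"
    unfolding ip_def by (simp add: sum_distrib_left algebra_simps)
  also have "\<dots> = (\<Sum>a\<in>A. \<Sum>i<K. c a * (cnj (x i) * y a i))" by (rule sum.swap)
  also have "\<dots> = (\<Sum>a\<in>A. c a * ip K x (y a))" unfolding ip_def by (simp add: sum_distrib_left)
  finally show ?thesis .
qed

lemma ip_scale: "ip K (\<lambda>i. \<alpha> * x i) (\<lambda>i. \<beta> * y i) = cnj \<alpha> * \<beta> * ip K x y"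
  unfolding ip_def by (simp add: sum_distrib_left algebra_simps)

lemma gram_unitary:
  fixes a b :: "'r \<Rightarrow> nat \<Rightarrow> complex"
  assumes "finite S" "\<forall>r\<in>S. \<forall>s\<in>S. ip K (a r) (a s) = ip K (b r) (b s)"
  shows "\<exists>U. unitary K U \<and> (\<forall>r\<in>S. \<forall>i<K. mv K U (a r) i = b r i)"
  using assms
proof (induction S rule: finite_induct)
  case empty
  then show ?case using unitary_id by blast
next
  case (insert p S)
  from insert.prems have gS: "\<forall>r\<in>S. \<forall>s\<in>S. ip K (a r) (a s) = ip K (b r) (b s)" by auto
  from insert.IH[OF gS] obtain U where U: "unitary K U"
    and Ua: "\<forall>r\<in>S. \<forall>i<K. mv K U (a r) i = b r i" by blast
  define x where "x = mv K U (a p)"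
  have xb: "ip K (b r) x = ip K (b r) (b p)" if "r \<in> S" for r
  proof -
    have "ip K (b r) x = ip K (mv K U (a r)) (mv K U (a p))"
      unfolding x_def using Ua that by (intro ip_cong) auto
    also have "\<dots> = ip K (a r) (a p)" using unitary_ip[OF U] .
    also have "\<dots> = ip K (b r) (b p)" using insert.prems that by auto
    finally show ?thesis .
  qed
  have xx: "ip K x x = ip K (b p) (b p)"
    using unitary_ip[OF U, of "a p" "a p"] insert.prems unfolding x_def by auto
  show ?case
  proof (cases "\<forall>i<K. x i = b p i")
    case True
    then show ?thesis using U Ua by (auto simp: x_def)
  next
    case False
    then have "\<exists>i<K. x i \<noteq> b p i" by auto
    from refl_unitary[OF xx this] obtain R where R: "unitary K R" "\<forall>i<K. mv K R x i = b p i"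
      "\<forall>z. ip K (\<lambda>i. x i - b p i) z = 0 \<longrightarrow> (\<forall>i<K. mv K R z i = z i)" by blast
    have "unitary K (kmat_mult K R U)" using unitary_mm R U by auto
    moreover have "\<forall>r\<in>insert p S. \<forall>i<K. mv K (kmat_mult K R U) (a r) i = b r i"
    proof (intro ballI allI impI)
      fix r i assume r: "r \<in> insert p S" and i: "i < K"
      have "mv K (kmat_mult K R U) (a r) i = mv K R (mv K U (a r)) i" by (rule mv_mm)
      also have "\<dots> = b r i"
      proof (cases "r = p")
        case True
        then show ?thesis using R(2) i by (simp add: x_def)
      next
        case False
        then have rS: "r \<in> S" using r by auto
        have "mv K R (mv K U (a r)) i = mv K R (b r) i" using Ua rS by (intro mv_cong) auto
        also have "ip K (\<lambda>i. x i - b p i) (b r) = 0"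
        proof -
          have "ip K (\<lambda>i. x i - b p i) (b r) = ip K x (b r) - ip K (b p) (b r)" by (rule ip_diff_left)
          also have "\<dots> = cnj (ip K (b r) x) - cnj (ip K (b r) (b p))"
            using ip_cnj by metis
          finally show ?thesis using xb[OF rS] by simp
        qed
        then have "mv K R (b r) i = b r i" using R(3) i by blast
        finally show ?thesis .
      qed
      finally show "mv K (kmat_mult K R U) (a r) i = b r i" .
    qed
    ultimately show ?thesis by blast
  qed
qed

lemma extend_onb:
  assumes U: "unitary K U" and d: "d < K" and r1: "ip K r r = 1"
    and orth: "\<forall>a<d. ip K (\<lambda>i. U i a) r = 0"
  shows "\<exists>U'. unitary K U' \<and> (\<forall>a<d. \<forall>i<K. U' i a = U i a) \<and> (\<forall>i<K. U' i d = r i)"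
proof -
  define ea where "ea = (\<lambda>j::nat. \<lambda>i::nat. if i = j then (1::complex) else 0)"
  define bb where "bb = (\<lambda>j. if j = d then r else (\<lambda>i. U i j))"
  have g: "\<forall>j\<in>{..d}. \<forall>j'\<in>{..d}. ip K (ea j) (ea j') = ip K (bb j) (bb j')"
  proof (intro ballI)
    fix j j' assume j: "j \<in> {..d}" and j': "j' \<in> {..d}"
    have jK: "j < K" "j' < K" using j j' d by auto
    have "ip K (ea j) (ea j') = (if j = j' then 1 else 0)"
      unfolding ea_def using ip_basis[OF jK(1)] by simp
    also have "\<dots> = ip K (bb j) (bb j')"
    proof (cases "j = d")
      case True
      note jd = True
      show ?thesis
      proof (cases "j' = d")
        case True then show ?thesis using jd r1 by (simp add: bb_def)
      next
        case False
        then have "j' < d" using j' by auto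
        then have "ip K (\<lambda>i. U i j') r = 0" using orth by auto
        then have "ip K r (\<lambda>i. U i j') = 0" using ip_cnj by (metis complex_cnj_zero)
        then show ?thesis using jd False by (simp add: bb_def)
      qed
    next
      case False
      then have jd: "j < d" using j by auto
      show ?thesis
      proof (cases "j' = d")
        case True then show ?thesis using orth jd by (simp add: bb_def)
      next
        case False
        then show ?thesis using U jK jd unfolding bb_def unitary_def ip_def by auto
      qed
    qed
    finally show "ip K (ea j) (ea j') = ip K (bb j) (bb j')" .
  qed
  from gram_unitary[OF _ g] obtain U' where U': "unitary K U'"
    and e: "\<forall>j\<in>{..d}. \<forall>i<K. mv K U' (ea j) i = bb j i" by blast
  have col: "U' i j = bb j i" if "j \<le> d" "i < K" for i j
  proof -
    have "U' i j = mv K U' (ea j) i" unfolding ea_def using mv_basis[of j K U' i] that d by simp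
    also have "\<dots> = bb j i" using e that by auto
    finally show ?thesis .
  qed
  show ?thesis using U' col by (auto simp: bb_def)
qed

lemma E_lincomb:
  assumes S1: "(\<lambda>i. 0) \<in> E" and S2: "\<forall>x\<in>E. \<forall>y\<in>E. \<forall>\<alpha>. (\<lambda>i. \<alpha> * x i + y i) \<in> E"
    and u: "\<forall>a<(d::nat). u a \<in> E"
  shows "(\<lambda>i. \<Sum>a<d. c a * u a i) \<in> E"
  using u
proof (induction d)
  case 0
  then show ?case using S1 by simp
next
  case (Suc d)
  then have IH: "(\<lambda>i. \<Sum>a<d. c a * u a i) \<in> E" by auto
  have ud: "u d \<in> E" using Suc.prems by auto
  have "(\<lambda>i. c d * u d i + (\<lambda>i. \<Sum>a<d. c a * u a i) i) \<in> E"
    using spec[OF bspec[OF bspec[OF S2 ud] IH], of "c d"] .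
  then show ?case by (simp add: add.commute)
qed

lemma max_onb:
  assumes S1: "(\<lambda>i. 0) \<in> E" and S2: "\<forall>x\<in>E. \<forall>y\<in>E. \<forall>\<alpha>. (\<lambda>i. \<alpha> * x i + y i) \<in> E"
    and S3: "\<forall>x\<in>E. \<forall>y. (\<forall>i<K. x i = y i) \<longrightarrow> y \<in> E"
    and v: "v \<in> E" "\<exists>i<K. v i \<noteq> 0"
  shows "\<exists>U d. unitary K U \<and> 0 < d \<and> d \<le> K \<and> (\<forall>a<d. (\<lambda>i. U i a) \<in> E)
     \<and> (\<forall>z\<in>E. \<forall>i<K. z i = (\<Sum>a<d. ip K (\<lambda>k. U k a) z * U i a))"
proof -
  define P where "P d \<longleftrightarrow> d \<le> K \<and> (\<exists>U. unitary K U \<and> (\<forall>a<d. (\<lambda>i. U i a) \<in> E))" for d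
  have P0: "P 0" unfolding P_def using unitary_id by auto
  define d where "d = (GREATEST d. P d)"
  have bound: "\<forall>y. P y \<longrightarrow> y \<le> K" unfolding P_def by auto
  have Pd: "P d" unfolding d_def by (rule GreatestI_nat[of P 0 K, OF P0]) (use bound in auto)
  have dmax: "d' \<le> d" if "P d'" for d'
    unfolding d_def by (rule Greatest_le_nat[of P d' K, OF that]) (use bound in auto)
  from Pd obtain U where U: "unitary K U" and UE: "\<forall>a<d. (\<lambda>i. U i a) \<in> E" and dK: "d \<le> K"
    unfolding P_def by auto
  have span: "\<forall>z\<in>E. \<forall>i<K. z i = (\<Sum>a<d. ip K (\<lambda>k. U k a) z * U i a)"
  proof (intro ballI allI impI, rule ccontr)
    fix z i assume zE: "z \<in> E" and i: "i < K" and ne: "z i \<noteq> (\<Sum>a<d. ip K (\<lambda>k. U k a) z * U i a)"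
    define r where "r = (\<lambda>i. z i - (\<Sum>a<d. ip K (\<lambda>k. U k a) z * U i a))"
    have LC: "(\<lambda>i. \<Sum>a<d. ip K (\<lambda>k. U k a) z * U i a) \<in> E"
      by (rule E_lincomb[OF S1 S2, where u="\<lambda>a i. U i a"]) (use UE in auto)
    have "(\<lambda>i. (-1) * (\<lambda>i. \<Sum>a<d. ip K (\<lambda>k. U k a) z * U i a) i + z i) \<in> E"
      using spec[OF bspec[OF bspec[OF S2 LC] zE], of "-1"] .
    then have rE: "r \<in> E" unfolding r_def by simp
    have rorth: "ip K (\<lambda>k. U k b) r = 0" if b: "b < d" for b
    proof -
      have "ip K (\<lambda>k. U k b) r = ip K (\<lambda>k. U k b) z
          - ip K (\<lambda>k. U k b) (\<lambda>i. \<Sum>a<d. ip K (\<lambda>k. U k a) z * U i a)"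
        unfolding r_def ip_def by (simp add: sum_subtractf algebra_simps)
      also have "ip K (\<lambda>k. U k b) (\<lambda>i. \<Sum>a<d. ip K (\<lambda>k. U k a) z * U i a)
          = (\<Sum>a<d. ip K (\<lambda>k. U k a) z * ip K (\<lambda>k. U k b) (\<lambda>k. U k a))"
        by (rule ip_lincomb_right)
      also have "\<dots> = (\<Sum>a<d. ip K (\<lambda>k. U k a) z * (if b = a then 1 else 0))"
        using U b dK unfolding unitary_def ip_def by (intro sum.cong refl) auto
      also have "\<dots> = ip K (\<lambda>k. U k b) z" by (rule sum_delta_right'[OF b])
      finally show ?thesis by simp
    qed
    have rne: "r i \<noteq> 0" using ne unfolding r_def by simp
    show False
    proof (cases "d = K")
      case True
      have "(\<Sum>a<K. ip K (\<lambda>k. U k a) r * U i a) = r i" by (rule unitary_complete[OF U i])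
      moreover have "(\<Sum>a<K. ip K (\<lambda>k. U k a) r * U i a) = 0" using rorth True by simp
      ultimately show False using rne by simp
    next
      case False
      then have dK': "d < K" using dK by simp
      define s where "s = sqrt (Re (ip K r r))"
      have rr: "ip K r r = complex_of_real (Re (ip K r r))" by (rule ip_self_real)
      have "ip K r r \<noteq> 0" using ip_self_zero[of K r i] i rne by auto
      then have "Re (ip K r r) \<noteq> 0" using rr by (metis of_real_0)
      then have spos: "s > 0" using ip_self_real(2)[of K r] unfolding s_def by simp
      define r' where "r' = (\<lambda>i. (1 / complex_of_real s) * r i)"
      have "(\<lambda>i. (1 / complex_of_real s) * r i + (\<lambda>i. 0) i) \<in> E"
        using spec[OF bspec[OF bspec[OF S2 rE] S1], of "1 / complex_of_real s"] .
      then have r'E: "r' \<in> E" unfolding r'_def by simp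
      have "ip K r' r' = cnj (1 / complex_of_real s) * (1 / complex_of_real s) * ip K r r"
        unfolding r'_def by (rule ip_scale)
      also have "\<dots> = 1 / (complex_of_real s)^2 * complex_of_real (s^2)"
        using rr ip_self_real(2)[of K r] unfolding s_def by (simp add: power2_eq_square)
      also have "\<dots> = 1" using spos by (simp add: field_simps)
      finally have r'1: "ip K r' r' = 1" .
      have r'orth: "\<forall>a<d. ip K (\<lambda>i. U i a) r' = 0"
      proof (intro allI impI)
        fix a assume "a < d"
        have "ip K (\<lambda>i. 1 * U i a) r' = cnj 1 * (1 / complex_of_real s) * ip K (\<lambda>i. U i a) r"
          unfolding r'_def by (rule ip_scale)
        then show "ip K (\<lambda>i. U i a) r' = 0" using rorth[OF \<open>a < d\<close>] by simp
      qed
      from extend_onb[OF U dK' r'1 r'orth] obtain U' where U': "unitary K U'"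
        and c1: "\<forall>a<d. \<forall>i<K. U' i a = U i a" and c2: "\<forall>i<K. U' i d = r' i" by blast
      have "\<forall>a<Suc d. (\<lambda>i. U' i a) \<in> E"
      proof (intro allI impI)
        fix a assume a: "a < Suc d"
        show "(\<lambda>i. U' i a) \<in> E"
        proof (cases "a = d")
          case True then show ?thesis using S3 r'E c2 by auto
        next
          case False then have "a < d" using a by simp
          then show ?thesis using S3 UE c1 by auto
        qed
      qed
      then have "P (Suc d)" unfolding P_def using U' dK' by auto
      then show False using dmax by fastforce
    qed
  qed
  have "0 < d"
  proof (rule ccontr)
    assume "\<not> 0 < d"
    then have "d = 0" by simp
    then show False using span v by auto
  qed
  then show ?thesis using U UE dK span by blast
qed


lemma mv_lincomb: "mv K B (\<lambda>i. \<Sum>b\<in>A. c b * u b i) i = (\<Sum>b\<in>A. c b * mv K B (u b) i)"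
proof -
  have "mv K B (\<lambda>i. \<Sum>b\<in>A. c b * u b i) i = (\<Sum>j<K. \<Sum>b\<in>A. c b * (B i j * u b j))"
    unfolding mv_def by (simp add: sum_distrib_left algebra_simps)
  also have "\<dots> = (\<Sum>b\<in>A. \<Sum>j<K. c b * (B i j * u b j))" by (rule sum.swap)
  also have "\<dots> = (\<Sum>b\<in>A. c b * mv K B (u b) i)" unfolding mv_def by (simp add: sum_distrib_left)
  finally show ?thesis .
qed

lemma mv_lin2: "mv K A (\<lambda>i. \<alpha> * x i + y i) i = \<alpha> * mv K A x i + mv K A y i"
  unfolding mv_def by (simp add: sum.distrib sum_distrib_left algebra_simps)

lemma mv_zero: "mv K A (\<lambda>i. 0) i = 0"
  unfolding mv_def by simp

lemma eig_sub:
  assumes S1: "(\<lambda>i. 0) \<in> E" and S2: "\<forall>x\<in>E. \<forall>y\<in>E. \<forall>\<alpha>. (\<lambda>i. \<alpha> * x i + y i) \<in> E"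
    and S3: "\<forall>x\<in>E. \<forall>y. (\<forall>i<K. x i = y i) \<longrightarrow> y \<in> E"
    and v: "v \<in> E" "\<exists>i<K. v i \<noteq> 0"
    and inv: "\<forall>x\<in>E. mv K B x \<in> E"
  shows "\<exists>x\<in>E. (\<exists>i<K. x i \<noteq> 0) \<and> (\<exists>\<mu>. \<forall>i<K. mv K B x i = \<mu> * x i)"
proof -
  from max_onb[OF S1 S2 S3 v] obtain U d where U: "unitary K U" and d0: "0 < d" and dK: "d \<le> K"
    and UE: "\<forall>a<d. (\<lambda>i. U i a) \<in> E"
    and span: "\<forall>z\<in>E. \<forall>i<K. z i = (\<Sum>a<d. ip K (\<lambda>k. U k a) z * U i a)" by blast
  define C where "C = mat d d (\<lambda>(a,b). ip K (\<lambda>k. U k a) (mv K B (\<lambda>k. U k b)))"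
  have Cc: "C \<in> carrier_mat d d" unfolding C_def by simp
  from char_poly_factorized[OF Cc] obtain as where cp: "char_poly C = (\<Prod>a\<leftarrow>as. [:- a, 1:])"
    and las: "length as = d" by blast
  then obtain \<mu> rest where as: "as = \<mu> # rest" using d0 by (cases as) auto
  have "poly (char_poly C) \<mu> = 0" unfolding cp as by simp
  then have "eigenvalue C \<mu>" using eigenvalue_root_char_poly[OF Cc] by simp
  then obtain y where ev: "eigenvector C y \<mu>" unfolding eigenvalue_def by blast
  then have yc: "y \<in> carrier_vec d" and y0: "y \<noteq> 0\<^sub>v d" and Cy: "C *\<^sub>v y = \<mu> \<cdot>\<^sub>v y"
    unfolding eigenvector_def using Cc by auto
  define x where "x = (\<lambda>i. \<Sum>b<d. (y $ b) * U i b)"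
  have xE: "x \<in> E" unfolding x_def
    by (rule E_lincomb[OF S1 S2, where u="\<lambda>a i. U i a"]) (use UE in auto)
  have ipx: "ip K (\<lambda>k. U k a) x = y $ a" if a: "a < d" for a
  proof -
    have "ip K (\<lambda>k. U k a) x = (\<Sum>b<d. (y $ b) * ip K (\<lambda>k. U k a) (\<lambda>k. U k b))"
      unfolding x_def by (rule ip_lincomb_right)
    also have "\<dots> = (\<Sum>b<d. (y $ b) * (if a = b then 1 else 0))"
      using U a dK unfolding unitary_def ip_def by (intro sum.cong refl) auto
    also have "\<dots> = y $ a" by (rule sum_delta_right'[OF a])
    finally show ?thesis .
  qed
  have xne: "\<exists>i<K. x i \<noteq> 0"
  proof (rule ccontr)
    assume "\<not> (\<exists>i<K. x i \<noteq> 0)"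
    then have "\<forall>i<K. x i = 0" by auto
    then have "ip K (\<lambda>k. U k a) x = 0" for a unfolding ip_def by simp
    then have "\<forall>a<d. y $ a = 0" using ipx by metis
    then have "y = 0\<^sub>v d" using yc by (intro eq_vecI) auto
    then show False using y0 by simp
  qed
  have Bx: "mv K B x i = \<mu> * x i" if i: "i < K" for i
  proof -
    have colB: "mv K B (\<lambda>k. U k b) i = (\<Sum>a<d. C $$ (a,b) * U i a)" if b: "b < d" for b
    proof -
      have "mv K B (\<lambda>k. U k b) \<in> E" using inv UE b by auto
      then have "mv K B (\<lambda>k. U k b) i = (\<Sum>a<d. ip K (\<lambda>k. U k a) (mv K B (\<lambda>k. U k b)) * U i a)"
        using span i by blast
      also have "\<dots> = (\<Sum>a<d. C $$ (a,b) * U i a)"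
        unfolding C_def using b by (intro sum.cong refl) auto
      finally show ?thesis .
    qed
    have "mv K B x i = (\<Sum>b<d. (y $ b) * mv K B (\<lambda>k. U k b) i)"
      unfolding x_def by (rule mv_lincomb)
    also have "\<dots> = (\<Sum>b<d. \<Sum>a<d. (y $ b) * (C $$ (a,b) * U i a))"
      using colB by (simp add: sum_distrib_left)
    also have "\<dots> = (\<Sum>a<d. \<Sum>b<d. (y $ b) * (C $$ (a,b) * U i a))" by (rule sum.swap)
    also have "\<dots> = (\<Sum>a<d. (\<Sum>b<d. C $$ (a,b) * y $ b) * U i a)"
      by (simp add: sum_distrib_right sum_distrib_left algebra_simps)
    also have "\<dots> = (\<Sum>a<d. (\<mu> * y $ a) * U i a)"
    proof (intro sum.cong refl)
      fix a assume "a \<in> {..<d}"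
      then have a: "a < d" by simp
      have "(C *\<^sub>v y) $ a = (\<mu> \<cdot>\<^sub>v y) $ a" using Cy by simp
      then have "(\<Sum>b<d. C $$ (a,b) * y $ b) = \<mu> * y $ a"
        using a yc Cc by (simp add: scalar_prod_def atLeast0LessThan)
      then show "(\<Sum>b<d. C $$ (a,b) * y $ b) * U i a = (\<mu> * y $ a) * U i a" by simp
    qed
    also have "\<dots> = \<mu> * x i" unfolding x_def by (simp add: sum_distrib_left algebra_simps)
    finally show ?thesis .
  qed
  show ?thesis using xE xne Bx by blast
qed

lemma mv_mcong: "(\<forall>j<K. X i j = Y i j) \<Longrightarrow> mv K X x i = mv K Y x i"
  unfolding mv_def by (rule sum.cong) auto

lemma common_eig:
  assumes "finite F" "0 < K"
  shows "(\<forall>A\<in>F. \<forall>B\<in>F. kmat_commute K A B) \<longrightarrow>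
     (\<exists>v. (\<exists>i<K. v i \<noteq> 0) \<and> (\<forall>A\<in>F. \<exists>l. \<forall>i<K. mv K A v i = l * v i))"
  using assms(1)
proof (induction F rule: finite_induct)
  case empty
  show ?case using assms(2) by (intro impI exI[of _ "\<lambda>i. if i = 0 then 1 else 0"]) auto
next
  case (insert B F)
  show ?case
  proof
    assume comm: "\<forall>A\<in>insert B F. \<forall>B'\<in>insert B F. kmat_commute K A B'"
    then have "\<forall>A\<in>F. \<forall>B\<in>F. kmat_commute K A B" by auto
    with insert.IH obtain v where v0: "\<exists>i<K. v i \<noteq> 0"
      and vF: "\<forall>A\<in>F. \<exists>l. \<forall>i<K. mv K A v i = l * v i" by blast
    from bchoice[OF vF] obtain lam where lam: "\<forall>A\<in>F. \<forall>i<K. mv K A v i = lam A * v i" by blast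
    define E where "E = {x. \<forall>A\<in>F. \<forall>i<K. mv K A x i = lam A * x i}"
    have S1: "(\<lambda>i. 0) \<in> E" unfolding E_def by (simp add: mv_zero)
    have S2: "\<forall>x\<in>E. \<forall>y\<in>E. \<forall>\<alpha>. (\<lambda>i. \<alpha> * x i + y i) \<in> E"
    proof (intro ballI allI)
      fix x y \<alpha> assume x: "x \<in> E" and y: "y \<in> E"
      show "(\<lambda>i. \<alpha> * x i + y i) \<in> E" unfolding E_def
      proof (intro CollectI ballI allI impI)
        fix A i assume A: "A \<in> F" and i: "i < K"
        have "mv K A (\<lambda>i. \<alpha> * x i + y i) i = \<alpha> * mv K A x i + mv K A y i" by (rule mv_lin2)
        then show "mv K A (\<lambda>i. \<alpha> * x i + y i) i = lam A * (\<alpha> * x i + y i)"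
          using x y A i unfolding E_def by (simp add: algebra_simps)
      qed
    qed
    have S3: "\<forall>x\<in>E. \<forall>y. (\<forall>i<K. x i = y i) \<longrightarrow> y \<in> E"
    proof (intro ballI allI impI)
      fix x y assume "x \<in> E" and xy: "\<forall>i<K. x i = y i"
      then have "\<forall>A\<in>F. \<forall>i<K. mv K A x i = lam A * x i" unfolding E_def by auto
      moreover have "mv K A x i = mv K A y i" for A i using xy by (intro mv_cong) auto
      ultimately show "y \<in> E" unfolding E_def using xy by auto
    qed
    have vE: "v \<in> E" unfolding E_def using lam by auto
    have inv: "\<forall>x\<in>E. mv K B x \<in> E"
    proof
      fix x assume xE: "x \<in> E"
      show "mv K B x \<in> E" unfolding E_def
      proof (intro CollectI ballI allI impI)
        fix A i assume A: "A \<in> F" and i: "i < K"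
        have cAB: "kmat_commute K A B" using comm A by auto
        have "mv K A (mv K B x) i = mv K (kmat_mult K A B) x i" by (rule mv_mm[symmetric])
        also have "\<dots> = mv K (kmat_mult K B A) x i"
          using cAB i unfolding kmat_commute_def by (intro mv_mcong) auto
        also have "\<dots> = mv K B (mv K A x) i" by (rule mv_mm)
        also have "\<dots> = mv K B (\<lambda>i. lam A * x i + 0) i"
          using xE A unfolding E_def by (intro mv_cong) auto
        also have "\<dots> = lam A * mv K B x i" by (simp add: mv_lin2[where y="\<lambda>i. 0", simplified] mv_def sum_distrib_left algebra_simps)
        finally show "mv K A (mv K B x) i = lam A * mv K B x i" .
      qed
    qed
    from eig_sub[OF S1 S2 S3 vE v0 inv] obtain x where xE: "x \<in> E" and x0: "\<exists>i<K. x i \<noteq> 0"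
      and xB: "\<exists>\<mu>. \<forall>i<K. mv K B x i = \<mu> * x i" by blast
    have "\<forall>A\<in>insert B F. \<exists>l. \<forall>i<K. mv K A x i = l * x i"
      using xE xB unfolding E_def by auto
    then show "\<exists>v. (\<exists>i<K. v i \<noteq> 0) \<and> (\<forall>A\<in>insert B F. \<exists>l. \<forall>i<K. mv K A v i = l * v i)"
      using x0 by blast
  qed
qed


definition cj :: "nat \<Rightarrow> (nat\<Rightarrow>nat\<Rightarrow>complex) \<Rightarrow> (nat\<Rightarrow>nat\<Rightarrow>complex) \<Rightarrow> nat \<Rightarrow> nat \<Rightarrow> complex" where
  "cj K U A = kmat_mult K (kmat_adjoint U) (kmat_mult K A U)"

lemma mm_assoc: "kmat_mult K (kmat_mult K X Y) Z = kmat_mult K X (kmat_mult K Y Z)"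
proof (intro ext)
  fix i k
  have "kmat_mult K (kmat_mult K X Y) Z i k = (\<Sum>j<K. \<Sum>l<K. X i l * Y l j * Z j k)"
    unfolding kmat_mult_def by (simp add: sum_distrib_right)
  also have "\<dots> = (\<Sum>l<K. \<Sum>j<K. X i l * Y l j * Z j k)" by (rule sum.swap)
  also have "\<dots> = kmat_mult K X (kmat_mult K Y Z) i k"
    unfolding kmat_mult_def by (simp add: sum_distrib_left mult.assoc)
  finally show "kmat_mult K (kmat_mult K X Y) Z i k = kmat_mult K X (kmat_mult K Y Z) i k" .
qed

lemma adj_mm: "kmat_adjoint (kmat_mult K X Y) = kmat_mult K (kmat_adjoint Y) (kmat_adjoint X)"
  by (intro ext) (simp add: kmat_adjoint_def kmat_mult_def cnj_sum mult.commute)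

lemma adj_adj: "kmat_adjoint (kmat_adjoint X) = X"
  by (intro ext) (simp add: kmat_adjoint_def)

lemma mm_cong_right: "(\<forall>j<K. Z j k = Z' j k) \<Longrightarrow> kmat_mult K A Z i k = kmat_mult K A Z' i k"
  unfolding kmat_mult_def by (rule sum.cong) auto

lemma mm_cong_left: "(\<forall>j<K. X i j = X' i j) \<Longrightarrow> kmat_mult K X Z i k = kmat_mult K X' Z i k"
  unfolding kmat_mult_def by (rule sum.cong) auto

lemma UUadj:
  assumes U: "unitary K U" and j: "j < K"
  shows "kmat_mult K (kmat_mult K U (kmat_adjoint U)) W j k = W j k"
proof -
  have "kmat_mult K (kmat_mult K U (kmat_adjoint U)) W j k
      = (\<Sum>l<K. kmat_mult K U (kmat_adjoint U) j l * W l k)" by (simp add: kmat_mult_def)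
  also have "\<dots> = (\<Sum>l<K. (if j = l then 1 else 0) * W l k)"
  proof (intro sum.cong refl)
    fix l assume "l \<in> {..<K}"
    then have "kmat_mult K U (kmat_adjoint U) j l = (if j = l then 1 else 0)"
      using unitary_rows[OF U j] by (simp add: kmat_mult_def kmat_adjoint_def)
    then show "kmat_mult K U (kmat_adjoint U) j l * W l k = (if j = l then 1 else 0) * W l k" by simp
  qed
  also have "\<dots> = W j k" by (rule sum_delta_left[OF j])
  finally show ?thesis .
qed

lemma unitary_adj: "unitary K U \<Longrightarrow> unitary K (kmat_adjoint U)"
  unfolding unitary_def[of K "kmat_adjoint U"] kmat_adjoint_def using unitary_rows by simp

lemma cj_mult:
  assumes U: "unitary K U" and i: "i < K"
  shows "kmat_mult K (cj K U A) (cj K U B) i k = cj K U (kmat_mult K A B) i k"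
proof -
  have e1: "kmat_mult K (cj K U A) (cj K U B)
     = kmat_mult K (kmat_adjoint U) (kmat_mult K A (kmat_mult K (kmat_mult K U (kmat_adjoint U)) (kmat_mult K B U)))"
    unfolding cj_def by (simp add: mm_assoc)
  have "\<forall>j<K. kmat_mult K A (kmat_mult K (kmat_mult K U (kmat_adjoint U)) (kmat_mult K B U)) j k
      = kmat_mult K A (kmat_mult K B U) j k"
    using UUadj[OF U] by (intro allI impI mm_cong_right) auto
  then have "kmat_mult K (cj K U A) (cj K U B) i k
      = kmat_mult K (kmat_adjoint U) (kmat_mult K A (kmat_mult K B U)) i k"
    unfolding e1 by (rule mm_cong_right)
  also have "\<dots> = cj K U (kmat_mult K A B) i k" unfolding cj_def by (simp add: mm_assoc)
  finally show ?thesis .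
qed

lemma cj_adj: "kmat_adjoint (cj K U A) = cj K U (kmat_adjoint A)"
  unfolding cj_def by (simp add: adj_mm adj_adj mm_assoc)

lemma cj_cong: "meq K X Y \<Longrightarrow> cj K U X i k = cj K U Y i k"
  unfolding cj_def meq_def by (intro mm_cong_right allI impI mm_cong_left) auto

lemma cj_normal:
  assumes U: "unitary K U" and N: "kmat_normal K A"
  shows "kmat_normal K (cj K U A)"
  unfolding kmat_normal_def
proof (intro allI impI)
  fix i k assume i: "i < K" and k: "k < K"
  have "kmat_mult K (cj K U A) (kmat_adjoint (cj K U A)) i k
      = kmat_mult K (cj K U A) (cj K U (kmat_adjoint A)) i k" by (simp add: cj_adj)
  also have "\<dots> = cj K U (kmat_mult K A (kmat_adjoint A)) i k" by (rule cj_mult[OF U i])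
  also have "\<dots> = cj K U (kmat_mult K (kmat_adjoint A) A) i k"
    using N unfolding kmat_normal_def by (intro cj_cong) (simp add: meq_def)
  also have "\<dots> = kmat_mult K (cj K U (kmat_adjoint A)) (cj K U A) i k" by (rule cj_mult[OF U i, symmetric])
  also have "\<dots> = kmat_mult K (kmat_adjoint (cj K U A)) (cj K U A) i k" by (simp add: cj_adj)
  finally show "kmat_mult K (cj K U A) (kmat_adjoint (cj K U A)) i k
      = kmat_mult K (kmat_adjoint (cj K U A)) (cj K U A) i k" .
qed

lemma cj_commute:
  assumes U: "unitary K U" and C: "kmat_commute K A B"
  shows "kmat_commute K (cj K U A) (cj K U B)"
  unfolding kmat_commute_def
proof (intro allI impI)
  fix i k assume i: "i < K" and k: "k < K"
  have "kmat_mult K (cj K U A) (cj K U B) i k = cj K U (kmat_mult K A B) i k" by (rule cj_mult[OF U i])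
  also have "\<dots> = cj K U (kmat_mult K B A) i k"
    using C unfolding kmat_commute_def by (intro cj_cong) (simp add: meq_def)
  also have "\<dots> = kmat_mult K (cj K U B) (cj K U A) i k" by (rule cj_mult[OF U i, symmetric])
  finally show "kmat_mult K (cj K U A) (cj K U B) i k = kmat_mult K (cj K U B) (cj K U A) i k" .
qed

lemma cj_mm_unitary: "cj K (kmat_mult K U V) A = cj K V (cj K U A)"
  unfolding cj_def by (simp add: adj_mm mm_assoc)

lemma mv_scale: "mv K A (\<lambda>i. \<alpha> * x i) i = \<alpha> * mv K A x i"
  unfolding mv_def by (simp add: sum_distrib_left algebra_simps)


lemma normalize_vec:
  assumes "\<exists>i<K. v i \<noteq> 0"
  shows "\<exists>c. ip K (\<lambda>i. c * v i) (\<lambda>i. c * v i) = 1"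
proof -
  obtain i0 where i0: "i0 < K" "v i0 \<noteq> 0" using assms by blast
  define s where "s = sqrt (Re (ip K v v))"
  have rr: "ip K v v = complex_of_real (Re (ip K v v))" by (rule ip_self_real)
  have "ip K v v \<noteq> 0" using ip_self_zero[of K v i0] i0 by auto
  then have "Re (ip K v v) \<noteq> 0" using rr by (metis of_real_0)
  then have spos: "s > 0" using ip_self_real(2)[of K v] unfolding s_def by simp
  have "ip K (\<lambda>i. (1 / complex_of_real s) * v i) (\<lambda>i. (1 / complex_of_real s) * v i)
      = cnj (1 / complex_of_real s) * (1 / complex_of_real s) * ip K v v" by (rule ip_scale)
  also have "\<dots> = 1 / (complex_of_real s)^2 * complex_of_real (s^2)"
    using rr ip_self_real(2)[of K v] unfolding s_def by (simp add: power2_eq_square)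
  also have "\<dots> = 1" using spos by (simp add: field_simps)
  finally show ?thesis by blast
qed

lemma blk_V:
  fixes V' X :: "nat \<Rightarrow> nat \<Rightarrow> complex"
  defines "V \<equiv> (\<lambda>a b. if a = 0 then (if b = 0 then 1 else 0) else if b = 0 then 0 else V' (a - 1) (b - 1))"
  shows "cj (Suc K) V X (Suc a) (Suc b) = cj K V' (\<lambda>a b. X (Suc a) (Suc b)) a b"
    and "cj (Suc K) V X 0 (Suc b) = (\<Sum>l<K. X 0 (Suc l) * V' l b)"
    and "cj (Suc K) V X (Suc a) 0 = (\<Sum>j<K. cnj (V' j a) * X (Suc j) 0)"
  unfolding cj_def kmat_mult_def kmat_adjoint_def V_def
  by (simp_all add: sum.lessThan_Suc_shift del: sum.lessThan_Suc)

lemma blk_V_unitary: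
  fixes V' :: "nat \<Rightarrow> nat \<Rightarrow> complex"
  assumes V': "unitary K V'"
  defines "V \<equiv> (\<lambda>a b. if a = 0 then (if b = 0 then 1 else 0) else if b = 0 then 0 else V' (a - 1) (b - 1))"
  shows "unitary (Suc K) V"
  unfolding unitary_def
proof (intro allI impI)
  fix a b assume a: "a < Suc K" and b: "b < Suc K"
  show "(\<Sum>k<Suc K. cnj (V k a) * V k b) = (if a = b then 1 else 0)"
  proof (cases a)
    case 0
    then show ?thesis by (cases b) (simp_all add: V_def sum.lessThan_Suc_shift del: sum.lessThan_Suc)
  next
    case (Suc a')
    note Sa = Suc
    show ?thesis
    proof (cases b)
      case 0
      then show ?thesis using Sa by (simp add: V_def sum.lessThan_Suc_shift del: sum.lessThan_Suc)
    next
      case (Suc b')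
      then show ?thesis using Sa a b V' unfolding unitary_def by (simp add: V_def sum.lessThan_Suc_shift del: sum.lessThan_Suc)
    qed
  qed
qed



lemma simdiag:
  assumes "finite F" "\<forall>A\<in>F. kmat_normal K A" "\<forall>A\<in>F. \<forall>B\<in>F. kmat_commute K A B"
  shows "\<exists>U. unitary K U \<and> (\<forall>A\<in>F. \<forall>a<K. \<forall>b<K. a \<noteq> b \<longrightarrow> cj K U A a b = 0)"
  using assms
proof (induction K arbitrary: F)
  case 0
  then show ?case by (auto simp: unitary_def)
next
  case (Suc K F)
  show ?case
  proof (cases "F = {}")
    case True
    then show ?thesis using unitary_id by blast
  next
    case False
    from common_eig[of F "Suc K"] Suc.prems obtain v where v0: "\<exists>i<Suc K. v i \<noteq> 0"
      and vF: "\<forall>A\<in>F. \<exists>l. \<forall>i<Suc K. mv (Suc K) A v i = l * v i" by auto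
    from bchoice[OF vF] obtain lam where lam: "\<forall>A\<in>F. \<forall>i<Suc K. mv (Suc K) A v i = lam A * v i"
      by blast
    from normalize_vec[OF v0] obtain c where c: "ip (Suc K) (\<lambda>i. c * v i) (\<lambda>i. c * v i) = 1" by blast
    define v1 where "v1 = (\<lambda>i. c * v i)"
    have lam1: "mv (Suc K) A v1 i = lam A * v1 i" if "A \<in> F" "i < Suc K" for A i
      using lam that unfolding v1_def by (simp add: mv_scale)
    have v11: "ip (Suc K) v1 v1 = 1" using c unfolding v1_def .
    from extend_onb[where K="Suc K" and U=idm and d=0 and r=v1, OF unitary_id _ v11]
    obtain U where U: "unitary (Suc K) U" and U0: "\<forall>i<Suc K. U i 0 = v1 i" by auto
    define B where "B = (\<lambda>A. cj (Suc K) U A)"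
    have P1: "B A a 0 = (if a = 0 then lam A else 0)" if A: "A \<in> F" and a: "a < Suc K" for A a
    proof -
      have "B A a 0 = (\<Sum>j<Suc K. cnj (U j a) * kmat_mult (Suc K) A U j 0)"
        by (simp add: B_def cj_def kmat_mult_def kmat_adjoint_def)
      also have "\<dots> = (\<Sum>j<Suc K. cnj (U j a) * (lam A * U j 0))"
      proof (intro sum.cong refl)
        fix j assume "j \<in> {..<Suc K}"
        then have j: "j < Suc K" by simp
        have "kmat_mult (Suc K) A U j 0 = mv (Suc K) A v1 j"
          unfolding kmat_mult_def mv_def using U0 by (intro sum.cong) auto
        also have "\<dots> = lam A * U j 0" using lam1[OF A j] U0 j by simp
        finally show "cnj (U j a) * kmat_mult (Suc K) A U j 0 = cnj (U j a) * (lam A * U j 0)" by simp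
      qed
      also have "\<dots> = lam A * (\<Sum>j<Suc K. cnj (U j a) * U j 0)"
        by (simp add: sum_distrib_left algebra_simps)
      also have "\<dots> = lam A * (if a = 0 then 1 else 0)" using U a unfolding unitary_def by simp
      finally show ?thesis by simp
    qed
    have normB: "kmat_normal (Suc K) (B A)" if "A \<in> F" for A
      unfolding B_def by (rule cj_normal[OF U]) (use Suc.prems that in blast)
    have commB: "kmat_commute (Suc K) (B A) (B C)" if "A \<in> F" "C \<in> F" for A C
      unfolding B_def by (rule cj_commute[OF U]) (use Suc.prems that in blast)
    have P2: "B A 0 (Suc b) = 0" if A: "A \<in> F" and b: "b < K" for A b
    proof -
      let ?B = "B A"
      have "kmat_mult (Suc K) ?B (kmat_adjoint ?B) 0 0 = kmat_mult (Suc K) (kmat_adjoint ?B) ?B 0 0"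
        using normB[OF A] unfolding kmat_normal_def by auto
      moreover have "kmat_mult (Suc K) ?B (kmat_adjoint ?B) 0 0 = (\<Sum>j<Suc K. complex_of_real ((cmod (?B 0 j))^2))"
        unfolding kmat_mult_def kmat_adjoint_def
        by (rule sum.cong) (simp_all add: complex_norm_square del: of_real_power)
      moreover have "kmat_mult (Suc K) (kmat_adjoint ?B) ?B 0 0 = complex_of_real ((cmod (lam A))^2)"
      proof -
        have "kmat_mult (Suc K) (kmat_adjoint ?B) ?B 0 0 = (\<Sum>j<Suc K. if j = 0 then cnj (lam A) * lam A else 0)"
          unfolding kmat_mult_def kmat_adjoint_def using P1[OF A] by (intro sum.cong refl) auto
        also have "\<dots> = cnj (lam A) * lam A" by simp
        finally show ?thesis by (simp add: complex_norm_square mult.commute del: of_real_power)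
      qed
      ultimately have "(\<Sum>j<Suc K. complex_of_real ((cmod (?B 0 j))^2)) = complex_of_real ((cmod (lam A))^2)"
        by simp
      moreover have "?B 0 0 = lam A" using P1[OF A, of 0] by simp
      ultimately have "(\<Sum>j<K. complex_of_real ((cmod (?B 0 (Suc j)))^2)) = 0"
        by (simp add: sum.lessThan_Suc_shift del: of_real_power sum.lessThan_Suc)
      then have "complex_of_real (\<Sum>j<K. (cmod (?B 0 (Suc j)))^2) = 0"
        by (simp add: of_real_sum del: of_real_power)
      then have "(\<Sum>j<K. (cmod (?B 0 (Suc j)))^2) = 0" by (simp only: of_real_eq_0_iff)
      then have "(cmod (?B 0 (Suc b)))^2 = 0" using b by (simp add: sum_nonneg_eq_0_iff)
      then show ?thesis by simp
    qed
    define B' where "B' = (\<lambda>A a b. B A (Suc a) (Suc b))"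
    have normB': "kmat_normal K (B' A)" if A: "A \<in> F" for A
      unfolding kmat_normal_def
    proof (intro allI impI)
      fix a k assume a: "a < K" and k: "k < K"
      have "kmat_mult K (B' A) (kmat_adjoint (B' A)) a k = kmat_mult (Suc K) (B A) (kmat_adjoint (B A)) (Suc a) (Suc k)"
        unfolding kmat_mult_def kmat_adjoint_def B'_def using P1[OF A] a k
        by (simp add: sum.lessThan_Suc_shift del: sum.lessThan_Suc)
      also have "\<dots> = kmat_mult (Suc K) (kmat_adjoint (B A)) (B A) (Suc a) (Suc k)"
        using normB[OF A] a k unfolding kmat_normal_def by auto
      also have "\<dots> = kmat_mult K (kmat_adjoint (B' A)) (B' A) a k"
        unfolding kmat_mult_def kmat_adjoint_def B'_def using P2[OF A] a k
        by (simp add: sum.lessThan_Suc_shift del: sum.lessThan_Suc)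
      finally show "kmat_mult K (B' A) (kmat_adjoint (B' A)) a k = kmat_mult K (kmat_adjoint (B' A)) (B' A) a k" .
    qed
    have commB': "kmat_commute K (B' A) (B' C)" if A: "A \<in> F" and C: "C \<in> F" for A C
      unfolding kmat_commute_def
    proof (intro allI impI)
      fix a k assume a: "a < K" and k: "k < K"
      have "kmat_mult K (B' A) (B' C) a k = kmat_mult (Suc K) (B A) (B C) (Suc a) (Suc k)"
        unfolding kmat_mult_def B'_def using P1[OF A] a k
        by (simp add: sum.lessThan_Suc_shift del: sum.lessThan_Suc)
      also have "\<dots> = kmat_mult (Suc K) (B C) (B A) (Suc a) (Suc k)"
        using commB[OF A C] a k unfolding kmat_commute_def by auto
      also have "\<dots> = kmat_mult K (B' C) (B' A) a k"
        unfolding kmat_mult_def B'_def using P1[OF C] a k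
        by (simp add: sum.lessThan_Suc_shift del: sum.lessThan_Suc)
      finally show "kmat_mult K (B' A) (B' C) a k = kmat_mult K (B' C) (B' A) a k" .
    qed
    have "finite (B' ` F)" using Suc.prems by simp
    moreover have "\<forall>A\<in>B' ` F. kmat_normal K A" using normB' by auto
    moreover have "\<forall>A\<in>B' ` F. \<forall>C\<in>B' ` F. kmat_commute K A C" using commB' by auto
    ultimately have "\<exists>U. unitary K U \<and> (\<forall>A\<in>B' ` F. \<forall>a<K. \<forall>b<K. a \<noteq> b \<longrightarrow> cj K U A a b = 0)"
      by (rule Suc.IH)
    then obtain V' where V': "unitary K V'"
      and dV': "\<forall>A\<in>B' ` F. \<forall>a<K. \<forall>b<K. a \<noteq> b \<longrightarrow> cj K V' A a b = 0"
      by blast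
    define V where "V = (\<lambda>a b. if a = 0 then (if b = 0 then 1 else 0) else if b = 0 then 0 else V' (a - 1) (b - 1))"
    have V: "unitary (Suc K) V" unfolding V_def by (rule blk_V_unitary[OF V'])
    have W: "unitary (Suc K) (kmat_mult (Suc K) U V)" by (rule unitary_mm[OF U V])
    have "\<forall>A\<in>F. \<forall>a<Suc K. \<forall>b<Suc K. a \<noteq> b \<longrightarrow> cj (Suc K) (kmat_mult (Suc K) U V) A a b = 0"
    proof (intro ballI allI impI)
      fix A a b assume A: "A \<in> F" and a: "a < Suc K" and b: "b < Suc K" and ab: "a \<noteq> b"
      have e: "cj (Suc K) (kmat_mult (Suc K) U V) A a b = cj (Suc K) V (B A) a b"
        unfolding cj_mm_unitary B_def ..
      show "cj (Suc K) (kmat_mult (Suc K) U V) A a b = 0"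
      proof (cases a)
        case 0
        then obtain b' where b': "b = Suc b'" using ab by (cases b) auto
        then have "b' < K" using b by simp
        have "cj (Suc K) V (B A) 0 (Suc b') = (\<Sum>l<K. B A 0 (Suc l) * V' l b')"
          unfolding V_def by (rule blk_V(2))
        also have "\<dots> = 0" using P2[OF A] by simp
        finally show ?thesis using e 0 b' by simp
      next
        case (Suc a')
        note Sa = Suc
        show ?thesis
        proof (cases b)
          case 0
          have "cj (Suc K) V (B A) (Suc a') 0 = (\<Sum>j<K. cnj (V' j a') * B A (Suc j) 0)"
            unfolding V_def by (rule blk_V(3))
          also have "\<dots> = 0" using P1[OF A] by simp
          finally show ?thesis using e 0 Sa by simp
        next
          case (Suc b')
          have "cj (Suc K) V (B A) (Suc a') (Suc b') = cj K V' (B' A) a' b'"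
            unfolding V_def B'_def by (rule blk_V(1))
          also have "\<dots> = 0"
          proof -
            have h: "a' < K" "b' < K" "a' \<noteq> b'" using a b ab Sa Suc by auto
            have "B' A \<in> B' ` F" using A by (rule imageI)
            then show ?thesis using dV' h by blast
          qed
          finally show ?thesis using e Sa Suc by simp
        qed
      qed
    qed
    then show ?thesis using W by blast
  qed
qed


lemma onb_cols:
  assumes "is_onb M e" "i < M" "i' < M"
  shows "(\<Sum>m<M. e m i * cnj (e m i')) = (if i = i' then 1 else 0)"
proof -
  have "\<forall>a<M. \<forall>b<M. (\<Sum>k<M. (\<lambda>a b. cnj (e a b)) a k * (\<lambda>i k. e k i) k b) = (if a = b then 1 else 0)"
    using assms(1) unfolding is_onb_def by simp
  from left_right_inv[OF this] assms(2,3) show ?thesis by simp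
qed

lemma sum_swap3: "(\<Sum>a\<in>A. \<Sum>b\<in>B. \<Sum>c\<in>C. f a b c) = (\<Sum>b\<in>B. \<Sum>c\<in>C. \<Sum>a\<in>A. f a b c)"
proof -
  have "(\<Sum>a\<in>A. \<Sum>b\<in>B. \<Sum>c\<in>C. f a b c) = (\<Sum>b\<in>B. \<Sum>a\<in>A. \<Sum>c\<in>C. f a b c)" by (rule sum.swap)
  also have "\<dots> = (\<Sum>b\<in>B. \<Sum>c\<in>C. \<Sum>a\<in>A. f a b c)" by (rule sum.cong[OF refl], rule sum.swap)
  finally show ?thesis .
qed

lemma decomp_rel:
  assumes D1: "is_decomp M N K \<rho> \<Phi>" and D2: "is_decomp M N K \<rho> \<Phi>'"
  shows "\<exists>U. unitary K U \<and> (\<forall>l<K. \<forall>i<M. \<forall>j<N. \<Phi>' l i j = (\<Sum>k<K. U l k * \<Phi> k i j))"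
proof -
  define a where "a = (\<lambda>p l. \<Phi> l (fst p) (snd p))"
  define b where "b = (\<lambda>p l. \<Phi>' l (fst p) (snd p))"
  have g: "\<forall>p\<in>{..<M} \<times> {..<N}. \<forall>q\<in>{..<M} \<times> {..<N}. ip K (a p) (a q) = ip K (b p) (b q)"
  proof (intro ballI)
    fix p q assume p: "p \<in> {..<M} \<times> {..<N}" and q: "q \<in> {..<M} \<times> {..<N}"
    have "ip K (a p) (a q) = cnj (\<rho> (fst p) (snd p) (fst q) (snd q))"
      using D1 p q unfolding is_decomp_def a_def ip_def by (auto simp: cnj_sum mult.commute)
    also have "\<dots> = ip K (b p) (b q)"
      using D2 p q unfolding is_decomp_def b_def ip_def by (auto simp: cnj_sum mult.commute)
    finally show "ip K (a p) (a q) = ip K (b p) (b q)" .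
  qed
  from gram_unitary[OF _ g] obtain U where U: "unitary K U"
    and e: "\<forall>p\<in>{..<M} \<times> {..<N}. \<forall>l<K. mv K U (a p) l = b p l" by blast
  have "\<forall>l<K. \<forall>i<M. \<forall>j<N. \<Phi>' l i j = (\<Sum>k<K. U l k * \<Phi> k i j)"
  proof (intro allI impI)
    fix l i j assume "l < K" "i < M" "j < N"
    then have "mv K U (a (i,j)) l = b (i,j) l" using e by auto
    then show "\<Phi>' l i j = (\<Sum>k<K. U l k * \<Phi> k i j)" unfolding mv_def a_def b_def by simp
  qed
  then show ?thesis using U by blast
qed

lemma gram_mix:
  assumes "\<forall>l<K. \<forall>i<M. \<forall>j<N. \<Phi>' l i j = (\<Sum>k<K. U l k * \<Phi> k i j)" and l: "l < K"
  shows "gram_vec M N \<Phi>' e f l m n = (\<Sum>k<K. cnj (U l k) * gram_vec M N \<Phi> e f k m n)"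
proof -
  have "gram_vec M N \<Phi>' e f l m n = (\<Sum>i<M. \<Sum>j<N. \<Sum>k<K. cnj (U l k) * (cnj (\<Phi> k i j) * e m i * f n j))"
    unfolding gram_vec_def using assms
    by (intro sum.cong refl) (simp add: cnj_sum sum_distrib_right sum_distrib_left algebra_simps)
  also have "\<dots> = (\<Sum>k<K. \<Sum>i<M. \<Sum>j<N. cnj (U l k) * (cnj (\<Phi> k i j) * e m i * f n j))"
    by (rule sum_swap3[symmetric, where A="{..<K}" and B="{..<M}" and C="{..<N}", simplified])
  also have "\<dots> = (\<Sum>k<K. cnj (U l k) * gram_vec M N \<Phi> e f k m n)"
    unfolding gram_vec_def by (simp add: sum_distrib_left)
  finally show ?thesis .
qed

lemma adjW_W: "unitary K W \<Longrightarrow> i < K \<Longrightarrow> mv K (kmat_adjoint W) (mv K W y) i = y i"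
proof -
  assume W: "unitary K W" and i: "i < K"
  have "mv K (kmat_adjoint W) (mv K W y) i = mv K (kmat_mult K (kmat_adjoint W) W) y i" by (rule mv_mm[symmetric])
  also have "\<dots> = (\<Sum>k<K. (if i = k then 1 else 0) * y k)"
    unfolding mv_def using W i unfolding unitary_def
    by (intro sum.cong refl) (simp add: kmat_mult_def kmat_adjoint_def)
  also have "\<dots> = y i" by (rule sum_delta_left[OF i])
  finally show ?thesis .
qed

lemma conj_mv:
  assumes W: "unitary K W" and l: "l < K"
  shows "mv K (kmat_mult K W (kmat_mult K X (kmat_adjoint W))) (mv K W y) l = mv K W (mv K X y) l"
proof -
  have "mv K (kmat_mult K W (kmat_mult K X (kmat_adjoint W))) (mv K W y) l
      = mv K W (mv K (kmat_mult K X (kmat_adjoint W)) (mv K W y)) l" by (rule mv_mm)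
  also have "\<dots> = mv K W (mv K X y) l"
  proof (rule mv_cong, intro allI impI)
    fix j assume "j < K"
    have "mv K (kmat_mult K X (kmat_adjoint W)) (mv K W y) j = mv K X (mv K (kmat_adjoint W) (mv K W y)) j"
      by (rule mv_mm)
    also have "\<dots> = mv K X y j" using adjW_W[OF W] by (intro mv_cong) auto
    finally show "mv K (kmat_mult K X (kmat_adjoint W)) (mv K W y) j = mv K X y j" .
  qed
  finally show ?thesis .
qed

lemma transfer:
  assumes D1: "is_decomp M N K \<rho> \<Phi>" and D2: "is_decomp M N K \<rho> \<Phi>'"
    and G: "gram_condition M N K \<Phi> e f"
  shows "gram_condition M N K \<Phi>' e f"
proof -
  from decomp_rel[OF D1 D2] obtain U where U: "unitary K U"
    and rel: "\<forall>l<K. \<forall>i<M. \<forall>j<N. \<Phi>' l i j = (\<Sum>k<K. U l k * \<Phi> k i j)" by blast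
  define V where "V = (\<lambda>l k. cnj (U l k))"
  have V: "unitary K V"
    unfolding unitary_def V_def
  proof (intro allI impI)
    fix i j assume "i < K" "j < K"
    then have "(\<Sum>k<K. cnj (U k i) * U k j) = (if i = j then 1 else 0)" using U unfolding unitary_def by auto
    then have "cnj (\<Sum>k<K. cnj (U k i) * U k j) = (if i = j then 1 else 0)" by simp
    then show "(\<Sum>k<K. cnj (cnj (U k i)) * cnj (U k j)) = (if i = j then 1 else 0)"
      by (simp add: cnj_sum mult.commute)
  qed
  from G obtain Mat where N: "\<forall>m<M. \<forall>k<M. kmat_normal K (Mat m k)"
    and C: "\<forall>m<M. \<forall>k<M. \<forall>m'<M. \<forall>k'<M. kmat_commute K (Mat m k) (Mat m' k')"
    and R: "\<forall>m<M. \<forall>k<M. \<forall>n<N. \<forall>l<K. (\<Sum>j<K. Mat m k l j * gram_vec M N \<Phi> e f j k n) = gram_vec M N \<Phi> e f l m n"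
    unfolding gram_condition_def by blast
  define Mat' where "Mat' = (\<lambda>m k. cj K (kmat_adjoint V) (Mat m k))"
  have Meq: "Mat' m k = kmat_mult K V (kmat_mult K (Mat m k) (kmat_adjoint V))" for m k
    unfolding Mat'_def cj_def adj_adj ..
  have VA: "unitary K (kmat_adjoint V)" by (rule unitary_adj[OF V])
  have w': "gram_vec M N \<Phi>' e f l k n = mv K V (\<lambda>j. gram_vec M N \<Phi> e f j k n) l" if "l < K" for l k n
    using gram_mix[OF rel that] unfolding mv_def V_def by simp
  have "\<forall>m<M. \<forall>k<M. kmat_normal K (Mat' m k)" unfolding Mat'_def using cj_normal[OF VA] N by auto
  moreover have "\<forall>m<M. \<forall>k<M. \<forall>m'<M. \<forall>k'<M. kmat_commute K (Mat' m k) (Mat' m' k')"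
    unfolding Mat'_def using cj_commute[OF VA] C by auto
  moreover have "\<forall>m<M. \<forall>k<M. \<forall>n<N. \<forall>l<K. (\<Sum>j<K. Mat' m k l j * gram_vec M N \<Phi>' e f j k n) = gram_vec M N \<Phi>' e f l m n"
  proof (intro allI impI)
    fix m k n l assume m: "m < M" and k: "k < M" and n: "n < N" and l: "l < K"
    have "(\<Sum>j<K. Mat' m k l j * gram_vec M N \<Phi>' e f j k n)
        = mv K (Mat' m k) (mv K V (\<lambda>j. gram_vec M N \<Phi> e f j k n)) l"
      unfolding mv_def[of K "Mat' m k"] using w' by (intro sum.cong refl) auto
    also have "\<dots> = mv K V (mv K (Mat m k) (\<lambda>j. gram_vec M N \<Phi> e f j k n)) l"
      unfolding Meq by (rule conj_mv[OF V l])
    also have "\<dots> = mv K V (\<lambda>j. gram_vec M N \<Phi> e f j m n) l"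
      using R m k n by (intro mv_cong) (auto simp: mv_def)
    also have "\<dots> = gram_vec M N \<Phi>' e f l m n" using w'[OF l] by simp
    finally show "(\<Sum>j<K. Mat' m k l j * gram_vec M N \<Phi>' e f j k n) = gram_vec M N \<Phi>' e f l m n" .
  qed
  ultimately show ?thesis unfolding gram_condition_def by blast
qed


lemma mix_decomp:
  assumes W: "\<forall>k<K. \<forall>k'<K. (\<Sum>l<K. W l k * cnj (W l k')) = (if k = k' then 1 else 0)"
    and D: "is_decomp M N K \<rho> \<Phi>"
  shows "is_decomp M N K \<rho> (\<lambda>l i j. \<Sum>k<K. W l k * \<Phi> k i j)"
  unfolding is_decomp_def
proof (intro allI impI)
  fix i j i' j' assume i: "i < M" and j: "j < N" and i': "i' < M" and j': "j' < N"
  have "(\<Sum>l<K. (\<Sum>k<K. W l k * \<Phi> k i j) * cnj (\<Sum>k<K. W l k * \<Phi> k i' j'))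
      = (\<Sum>l<K. \<Sum>k<K. \<Sum>k'<K. (W l k * cnj (W l k')) * (\<Phi> k i j * cnj (\<Phi> k' i' j')))"
    by (intro sum.cong refl) (simp add: cnj_sum sum_product algebra_simps)
  also have "\<dots> = (\<Sum>k<K. \<Sum>k'<K. \<Sum>l<K. (W l k * cnj (W l k')) * (\<Phi> k i j * cnj (\<Phi> k' i' j')))"
    by (rule sum_swap3)
  also have "\<dots> = (\<Sum>k<K. \<Sum>k'<K. (if k = k' then 1 else 0) * (\<Phi> k i j * cnj (\<Phi> k' i' j')))"
    using W by (intro sum.cong refl) (simp add: sum_distrib_right[symmetric])
  also have "\<dots> = (\<Sum>k<K. \<Phi> k i j * cnj (\<Phi> k i' j'))"
    by (intro sum.cong refl) (simp add: sum_delta_left)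
  also have "\<dots> = \<rho> i j i' j'" using D i j i' j' unfolding is_decomp_def by simp
  finally show "\<rho> i j i' j' = (\<Sum>l<K. (\<Sum>k<K. W l k * \<Phi> k i j) * cnj (\<Sum>k<K. W l k * \<Phi> k i' j'))" by simp
qed

lemma decomp_cong:
  assumes "\<forall>l<K. \<forall>i<M. \<forall>j<N. \<Phi> l i j = \<Psi> l i j" "is_decomp M N K \<rho> \<Phi>"
  shows "is_decomp M N K \<rho> \<Psi>"
  using assms unfolding is_decomp_def by (auto intro!: sum.cong)

lemma onb_expand:
  assumes e: "is_onb M e" and f: "is_onb N f" and i: "i < M" and j: "j < N"
  shows "(\<Sum>m<M. \<Sum>n<N. cnj (gram_vec M N \<Psi> e f l m n) * e m i * f n j) = \<Psi> l i j"
proof -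
  have A: "(\<Sum>n<N. cnj (gram_vec M N \<Psi> e f l m n) * f n j) = (\<Sum>i'<M. \<Psi> l i' j * cnj (e m i'))" for m
  proof -
    have "(\<Sum>n<N. cnj (gram_vec M N \<Psi> e f l m n) * f n j)
        = (\<Sum>n<N. \<Sum>i'<M. \<Sum>j'<N. \<Psi> l i' j' * cnj (e m i') * (f n j * cnj (f n j')))"
      unfolding gram_vec_def by (intro sum.cong refl) (simp add: cnj_sum sum_distrib_right sum_distrib_left algebra_simps)
    also have "\<dots> = (\<Sum>i'<M. \<Sum>j'<N. \<Sum>n<N. \<Psi> l i' j' * cnj (e m i') * (f n j * cnj (f n j')))"
      by (rule sum_swap3)
    also have "\<dots> = (\<Sum>i'<M. \<Sum>j'<N. \<Psi> l i' j' * cnj (e m i') * (if j = j' then 1 else 0))"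
      by (intro sum.cong refl) (simp add: sum_distrib_left[symmetric] onb_cols[OF f j])
    also have "\<dots> = (\<Sum>i'<M. \<Psi> l i' j * cnj (e m i'))"
      by (intro sum.cong refl) (rule sum_delta_right'[OF j])
    finally show ?thesis .
  qed
  have "(\<Sum>m<M. \<Sum>n<N. cnj (gram_vec M N \<Psi> e f l m n) * e m i * f n j)
      = (\<Sum>m<M. e m i * (\<Sum>n<N. cnj (gram_vec M N \<Psi> e f l m n) * f n j))"
    by (simp add: sum_distrib_left algebra_simps)
  also have "\<dots> = (\<Sum>m<M. e m i * (\<Sum>i'<M. \<Psi> l i' j * cnj (e m i')))" using A by simp
  also have "\<dots> = (\<Sum>m<M. \<Sum>i'<M. \<Psi> l i' j * (e m i * cnj (e m i')))"
    by (simp add: sum_distrib_left algebra_simps)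
  also have "\<dots> = (\<Sum>i'<M. \<Sum>m<M. \<Psi> l i' j * (e m i * cnj (e m i')))" by (rule sum.swap)
  also have "\<dots> = (\<Sum>i'<M. \<Psi> l i' j * (if i = i' then 1 else 0))"
    by (intro sum.cong refl) (simp add: sum_distrib_left[symmetric] onb_cols[OF e i])
  also have "\<dots> = \<Psi> l i j" by (rule sum_delta_right'[OF i])
  finally show ?thesis .
qed

lemma sep:
  assumes e: "is_onb M e" and f: "is_onb N f" and M0: "0 < M"
    and D: "is_decomp M N K \<rho> \<Phi>" and G: "gram_condition M N K \<Phi> e f"
  shows "K_separable M N K \<rho>"
proof -
  from G obtain Mat where N: "\<forall>m<M. \<forall>k<M. kmat_normal K (Mat m k)"
    and C: "\<forall>m<M. \<forall>k<M. \<forall>m'<M. \<forall>k'<M. kmat_commute K (Mat m k) (Mat m' k')"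
    and R: "\<forall>m<M. \<forall>k<M. \<forall>n<N. \<forall>l<K. (\<Sum>j<K. Mat m k l j * gram_vec M N \<Phi> e f j k n) = gram_vec M N \<Phi> e f l m n"
    unfolding gram_condition_def by blast
  define F where "F = (\<lambda>p. Mat (fst p) (snd p)) ` ({..<M} \<times> {..<M})"
  have "finite F" unfolding F_def by simp
  moreover have "\<forall>A\<in>F. kmat_normal K A" unfolding F_def using N by auto
  moreover have "\<forall>A\<in>F. \<forall>B\<in>F. kmat_commute K A B" unfolding F_def using C by auto
  ultimately have "\<exists>U. unitary K U \<and> (\<forall>A\<in>F. \<forall>a<K. \<forall>b<K. a \<noteq> b \<longrightarrow> cj K U A a b = 0)"
    by (rule simdiag)
  then obtain U where U: "unitary K U"
    and dg: "\<forall>A\<in>F. \<forall>a<K. \<forall>b<K. a \<noteq> b \<longrightarrow> cj K U A a b = 0"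
    by blast
  define W where "W = (\<lambda>l k. U k l)"
  define \<Phi>' where "\<Phi>' = (\<lambda>l i j. \<Sum>k<K. W l k * \<Phi> k i j)"
  have D': "is_decomp M N K \<rho> \<Phi>'" unfolding \<Phi>'_def
    by (rule mix_decomp[OF _ D]) (use unitary_rows[OF U] in \<open>simp add: W_def\<close>)
  define w where "w = gram_vec M N \<Phi> e f"
  define w' where "w' = gram_vec M N \<Phi>' e f"
  have w'eq: "w' l m n = mv K (kmat_adjoint U) (\<lambda>k. w k m n) l" if l: "l < K" for l m n
  proof -
    have "w' l m n = (\<Sum>k<K. cnj (W l k) * w k m n)" unfolding w'_def w_def
      by (rule gram_mix[OF _ l]) (simp add: \<Phi>'_def)
    then show ?thesis unfolding mv_def W_def kmat_adjoint_def by simp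
  qed
  define Dm where "Dm = (\<lambda>m k. cj K U (Mat m k))"
  have Deq: "Dm m k = kmat_mult K (kmat_adjoint U) (kmat_mult K (Mat m k) (kmat_adjoint (kmat_adjoint U)))" for m k
    unfolding Dm_def cj_def adj_adj ..
  have UA: "unitary K (kmat_adjoint U)" by (rule unitary_adj[OF U])
  have rel: "w' l m n = Dm m k l l * w' l k n" if m: "m < M" and k: "k < M" and n: "n < N" and l: "l < K" for m k n l
  proof -
    have "mv K (Dm m k) (\<lambda>j. w' j k n) l = mv K (Dm m k) (mv K (kmat_adjoint U) (\<lambda>j. w j k n)) l"
      using w'eq by (intro mv_cong) auto
    also have "\<dots> = mv K (kmat_adjoint U) (mv K (Mat m k) (\<lambda>j. w j k n)) l"
      unfolding Deq by (rule conj_mv[OF UA l])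
    also have "\<dots> = mv K (kmat_adjoint U) (\<lambda>j. w j m n) l"
      using R m k n unfolding w_def by (intro mv_cong) (auto simp: mv_def)
    also have "\<dots> = w' l m n" using w'eq[OF l] by simp
    finally have e1: "mv K (Dm m k) (\<lambda>j. w' j k n) l = w' l m n" .
    have "Mat m k \<in> F" unfolding F_def using m k by force
    then have off: "Dm m k l j = 0" if "j < K" "l \<noteq> j" for j
      using dg l that unfolding Dm_def by blast
    have "mv K (Dm m k) (\<lambda>j. w' j k n) l = (\<Sum>j<K. (if l = j then Dm m k l l * w' l k n else 0))"
      unfolding mv_def using off by (intro sum.cong refl) auto
    also have "\<dots> = Dm m k l l * w' l k n" using l by (subst sum.delta') auto
    finally show ?thesis using e1 by simp
  qed
  define phi where "phi = (\<lambda>l i. \<Sum>m<M. cnj (Dm m 0 l l) * e m i)"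
  define psi where "psi = (\<lambda>l j. \<Sum>n<N. cnj (w' l 0 n) * f n j)"
  have "\<forall>l<K. \<forall>i<M. \<forall>j<N. \<Phi>' l i j = phi l i * psi l j"
  proof (intro allI impI)
    fix l i j assume l: "l < K" and i: "i < M" and j: "j < N"
    have "\<Phi>' l i j = (\<Sum>m<M. \<Sum>n<N. cnj (w' l m n) * e m i * f n j)"
      unfolding w'_def using onb_expand[OF e f i j] by simp
    also have "\<dots> = (\<Sum>m<M. \<Sum>n<N. (cnj (Dm m 0 l l) * e m i) * (cnj (w' l 0 n) * f n j))"
    proof (intro sum.cong refl)
      fix m n assume mn: "m \<in> {..<M}" "n \<in> {..<N}"
      have "w' l m n = Dm m 0 l l * w' l 0 n" by (rule rel) (use M0 l mn in auto)
      then show "cnj (w' l m n) * e m i * f n j = (cnj (Dm m 0 l l) * e m i) * (cnj (w' l 0 n) * f n j)"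
        by (simp add: algebra_simps)
    qed
    also have "\<dots> = phi l i * psi l j" unfolding phi_def psi_def by (simp add: sum_product)
    finally show "\<Phi>' l i j = phi l i * psi l j" .
  qed
  note eqP = this
  have "is_decomp M N K \<rho> (\<lambda>l i j. phi l i * psi l j)"
    by (rule decomp_cong[OF _ D']) (use eqP in simp)
  then show ?thesis unfolding K_separable_def by blast
qed


lemma omega_facts:
  assumes M0: "0 < M"
  defines "\<omega> \<equiv> cis (2 * pi / real M)"
  shows "\<omega> ^ M = 1" and "\<And>d. 0 < d \<Longrightarrow> d < M \<Longrightarrow> \<omega> ^ d \<noteq> 1" and "cmod \<omega> = 1"
proof -
  have pw: "\<omega> ^ d = cis (2 * pi * real d / real M)" for d
  proof -
    have "\<omega> ^ d = cis (real d * (2 * pi / real M))" unfolding \<omega>_def by (rule Complex.DeMoivre)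
    also have "real d * (2 * pi / real M) = 2 * pi * real d / real M" by simp
    finally show ?thesis .
  qed
  show "\<omega> ^ M = 1" unfolding pw using M0 by (simp add: complex_eq_iff)
  show "cmod \<omega> = 1" unfolding \<omega>_def by simp
  fix d assume d: "0 < d" "d < M"
  have inj: "inj_on (\<lambda>k. cis (2 * pi * real k / real M)) {..<M}"
    using Complex.bij_betw_roots_unity[OF M0] unfolding bij_betw_def by blast
  show "\<omega> ^ d \<noteq> 1"
  proof
    assume "\<omega> ^ d = 1"
    then have "cis (2 * pi * real d / real M) = cis (2 * pi * real 0 / real M)" unfolding pw by simp
    then have "d = 0" using inj d M0 unfolding inj_on_def by blast
    then show False using d by simp
  qed
qed

lemma unit_circle_infinite: "infinite (range (\<lambda>n::nat. cis (1 / real (Suc n))))"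
proof -
  have "inj (\<lambda>n::nat. cis (1 / real (Suc n)))"
  proof (rule injI)
    fix a b :: nat assume "cis (1 / real (Suc a)) = cis (1 / real (Suc b))"
    then have "cos (1 / real (Suc a)) = cos (1 / real (Suc b))" by (metis cis.sel(1))
    moreover have le: "1 / real (Suc n) \<le> pi" for n
    proof -
      have "1 / real (Suc n) \<le> 1" by simp
      then show ?thesis using pi_ge_two by linarith
    qed
    moreover have "0 \<le> 1 / real (Suc n)" for n by simp
    ultimately have "1 / real (Suc a) = 1 / real (Suc b)" using cos_inj_pi by blast
    then show "a = b" by simp
  qed
  then show ?thesis using finite_imageD infinite_UNIV_nat by blast
qed

lemma generic_onb:
  fixes \<phi> :: "nat \<Rightarrow> nat \<Rightarrow> complex"
  assumes M0: "0 < M"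
  shows "\<exists>e. is_onb M e \<and> (\<forall>l<K. (\<exists>i<M. \<phi> l i \<noteq> 0) \<longrightarrow> (\<forall>m<M. (\<Sum>i<M. cnj (\<phi> l i) * e m i) \<noteq> 0))"
proof -
  define \<omega> where "\<omega> = cis (2 * pi / real M)"
  note om = omega_facts[OF M0, folded \<omega>_def]
  have om0: "\<omega> \<noteq> 0" using om(3) by auto
  define p where "p = (\<lambda>l. \<Sum>i<M. monom (cnj (\<phi> l i)) i)"
  have polyp: "poly (p l) x = (\<Sum>i<M. cnj (\<phi> l i) * x ^ i)" for l x
    unfolding p_def by (simp add: poly_sum poly_monom)
  have pne: "p l \<noteq> 0" if "\<exists>i<M. \<phi> l i \<noteq> 0" for l
  proof
    assume p0: "p l = 0"
    from that obtain i where i: "i < M" "\<phi> l i \<noteq> 0" by blast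
    have "coeff (p l) i = (\<Sum>j<M. if j = i then cnj (\<phi> l j) else 0)"
      unfolding p_def by (simp add: coeff_sum coeff_monom)
    also have "\<dots> = cnj (\<phi> l i)" using i by simp
    finally show False using p0 i by simp
  qed
  define L where "L = {l. l < K \<and> p l \<noteq> 0}"
  define Bad where "Bad = (\<Union>l\<in>L. \<Union>m<M. (\<lambda>r. r / \<omega> ^ m) ` {r. poly (p l) r = 0})"
  have "finite Bad" unfolding Bad_def L_def by (auto intro!: finite_imageI poly_roots_finite)
  then have "infinite (range (\<lambda>n::nat. cis (1 / real (Suc n))) - Bad)"
    using unit_circle_infinite by (rule Diff_infinite_finite)
  then obtain z where zS: "z \<in> range (\<lambda>n::nat. cis (1 / real (Suc n)))" and zB: "z \<notin> Bad"
    by (metis DiffE ex_in_conv finite.emptyI)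
  have z1: "cmod z = 1" using zS by auto
  have zz: "cnj z * z = 1"
    using z1 complex_norm_square[of z] by (simp add: mult.commute)
  define c where "c = complex_of_real (1 / sqrt (real M))"
  have sq: "complex_of_real (sqrt (real M)) * complex_of_real (sqrt (real M)) = of_nat M"
  proof -
    have "sqrt (real M) * sqrt (real M) = real M" by simp
    then have "complex_of_real (sqrt (real M) * sqrt (real M)) = complex_of_real (real M)" by simp
    then show ?thesis by (simp only: of_real_mult of_real_of_nat_eq)
  qed
  have cc: "cnj c * c * of_nat M = 1"
    unfolding c_def using sq M0 by (simp add: field_simps)
  define e where "e = (\<lambda>m i. c * (z * \<omega> ^ m) ^ i)"
  have ipe: "(\<Sum>i<M. cnj (e m i) * e k i) = cnj c * c * (\<Sum>i<M. (cnj (\<omega> ^ m) * \<omega> ^ k) ^ i)" for m k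
  proof -
    have "(\<Sum>i<M. cnj (e m i) * e k i) = (\<Sum>i<M. cnj c * c * ((cnj z * z) * (cnj (\<omega> ^ m) * \<omega> ^ k)) ^ i)"
      unfolding e_def by (intro sum.cong refl) (simp add: power_mult_distrib algebra_simps)
    then show ?thesis unfolding zz by (simp add: sum_distrib_left)
  qed
  have om_pow: "cnj (\<omega> ^ m) * \<omega> ^ m = 1" for m
    using om(3) complex_norm_square[of "\<omega> ^ m"] by (simp add: norm_power mult.commute)
  have orth_lt: "(\<Sum>i<M. cnj (e m i) * e k i) = 0" if mk: "m < k" "k < M" for m k
  proof -
    define q where "q = \<omega> ^ (k - m)"
    have "\<omega> ^ k = \<omega> ^ m * q"
      unfolding q_def using mk by (simp add: power_add[symmetric])
    then have "cnj (\<omega> ^ m) * \<omega> ^ k = (cnj (\<omega> ^ m) * \<omega> ^ m) * q" by (simp add: mult.assoc)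
    then have qeq: "cnj (\<omega> ^ m) * \<omega> ^ k = q" unfolding om_pow by simp
    have q1: "q \<noteq> 1" unfolding q_def using om(2)[of "k - m"] mk by simp
    have "q ^ M = (\<omega> ^ M) ^ (k - m)" unfolding q_def by (metis power_mult mult.commute)
    then have qM: "q ^ M = 1" using om(1) by simp
    have "(\<Sum>i<M. q ^ i) = 0" using q1 qM by (simp add: sum_gp_strict)
    then show ?thesis unfolding ipe qeq by simp
  qed
  have onb: "is_onb M e" unfolding is_onb_def
  proof (intro allI impI)
    fix m k assume m: "m < M" and k: "k < M"
    show "(\<Sum>i<M. cnj (e m i) * e k i) = (if m = k then 1 else 0)"
    proof (cases "m = k")
      case True
      then show ?thesis unfolding ipe True om_pow using cc by simp
    next
      case False
      show ?thesis
      proof (cases "m < k")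
        case True then show ?thesis using orth_lt k False by simp
      next
        case False
        then have "k < m" using \<open>m \<noteq> k\<close> by simp
        then have "(\<Sum>i<M. cnj (e k i) * e m i) = 0" using orth_lt m by simp
        then have "cnj (\<Sum>i<M. cnj (e k i) * e m i) = 0" by simp
        then show ?thesis using \<open>m \<noteq> k\<close> by (simp add: cnj_sum mult.commute)
      qed
    qed
  qed
  have gen: "(\<Sum>i<M. cnj (\<phi> l i) * e m i) \<noteq> 0" if l: "l < K" and ne: "\<exists>i<M. \<phi> l i \<noteq> 0" and m: "m < M" for l m
  proof
    assume "(\<Sum>i<M. cnj (\<phi> l i) * e m i) = 0"
    then have "c * poly (p l) (z * \<omega> ^ m) = 0" unfolding polyp e_def
      by (simp add: sum_distrib_left algebra_simps)
    moreover have "c \<noteq> 0" unfolding c_def using M0 by simp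
    ultimately have root: "poly (p l) (z * \<omega> ^ m) = 0" by simp
    have "l \<in> L" unfolding L_def using l pne[OF ne] by simp
    moreover have "z = (z * \<omega> ^ m) / \<omega> ^ m" using om0 by simp
    ultimately have "z \<in> Bad" unfolding Bad_def using root m by blast
    then show False using zB by simp
  qed
  show ?thesis using onb gen by blast
qed

lemma diag_mult:
  assumes "i < K"
  shows "kmat_mult K (\<lambda>l j. if l = j then a l else 0) (\<lambda>l j. if l = j then b l else 0) i k
    = (if i = k then a i * b i else 0)"
proof -
  have "kmat_mult K (\<lambda>l j. if l = j then a l else 0) (\<lambda>l j. if l = j then b l else 0) i k
      = (\<Sum>j<K. if i = j then a i * (if j = k then b j else 0) else 0)"
    unfolding kmat_mult_def by (intro sum.cong refl) auto
  also have "\<dots> = (if i = k then a i * b i else 0)" using assms by (subst sum.delta') auto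
  finally show ?thesis .
qed

lemma diag_adj: "kmat_adjoint (\<lambda>l j. if l = j then a l else 0) = (\<lambda>l j. if l = j then cnj (a l) else 0)"
  unfolding kmat_adjoint_def by (intro ext) auto

lemma diag_normal: "kmat_normal K (\<lambda>l j. if l = j then a l else 0)"
  unfolding kmat_normal_def diag_adj by (simp add: diag_mult mult.commute)

lemma diag_commute: "kmat_commute K (\<lambda>l j. if l = j then a l else 0) (\<lambda>l j. if l = j then b l else 0)"
  unfolding kmat_commute_def by (simp add: diag_mult mult.commute)

lemma prod_gram:
  fixes \<phi> \<psi> :: "nat \<Rightarrow> nat \<Rightarrow> complex"
  assumes gen: "\<forall>l<K. (\<exists>i<M. \<phi> l i \<noteq> 0) \<longrightarrow> (\<forall>m<M. (\<Sum>i<M. cnj (\<phi> l i) * e m i) \<noteq> 0)"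
  shows "gram_condition M N K (\<lambda>l i j. \<phi> l i * \<psi> l j) e f"
proof -
  define \<alpha> where "\<alpha> = (\<lambda>l m. \<Sum>i<M. cnj (\<phi> l i) * e m i)"
  define \<beta> where "\<beta> = (\<lambda>l n. \<Sum>j<N. cnj (\<psi> l j) * f n j)"
  have w: "gram_vec M N (\<lambda>l i j. \<phi> l i * \<psi> l j) e f l m n = \<alpha> l m * \<beta> l n" for l m n
    unfolding gram_vec_def \<alpha>_def \<beta>_def sum_product by (intro sum.cong refl) (simp add: algebra_simps)
  define Mat where "Mat = (\<lambda>m k l j. if l = j then (if \<alpha> l k = 0 then 0 else \<alpha> l m / \<alpha> l k) else 0)"
  have "\<forall>m<M. \<forall>k<M. kmat_normal K (Mat m k)" unfolding Mat_def by (simp add: diag_normal)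
  moreover have "\<forall>m<M. \<forall>k<M. \<forall>m'<M. \<forall>k'<M. kmat_commute K (Mat m k) (Mat m' k')"
    unfolding Mat_def by (simp add: diag_commute)
  moreover have "\<forall>m<M. \<forall>k<M. \<forall>n<N. \<forall>l<K. (\<Sum>j<K. Mat m k l j * gram_vec M N (\<lambda>l i j. \<phi> l i * \<psi> l j) e f j k n)
      = gram_vec M N (\<lambda>l i j. \<phi> l i * \<psi> l j) e f l m n"
  proof (intro allI impI)
    fix m k n l assume m: "m < M" and k: "k < M" and n: "n < N" and l: "l < K"
    have "(\<Sum>j<K. Mat m k l j * gram_vec M N (\<lambda>l i j. \<phi> l i * \<psi> l j) e f j k n)
        = (\<Sum>j<K. if l = j then (if \<alpha> l k = 0 then 0 else \<alpha> l m / \<alpha> l k) * (\<alpha> l k * \<beta> l n) else 0)"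
      unfolding Mat_def w by (intro sum.cong refl) auto
    also have "\<dots> = (if \<alpha> l k = 0 then 0 else \<alpha> l m / \<alpha> l k) * (\<alpha> l k * \<beta> l n)"
      using l by (subst sum.delta') auto
    also have "\<dots> = \<alpha> l m * \<beta> l n"
    proof (cases "\<alpha> l k = 0")
      case True
      then have "\<not> (\<exists>i<M. \<phi> l i \<noteq> 0)" using gen l k unfolding \<alpha>_def by blast
      then have "\<alpha> l m = 0" unfolding \<alpha>_def by simp
      then show ?thesis using True by simp
    next
      case False
      then show ?thesis by simp
    qed
    finally show "(\<Sum>j<K. Mat m k l j * gram_vec M N (\<lambda>l i j. \<phi> l i * \<psi> l j) e f j k n)
        = gram_vec M N (\<lambda>l i j. \<phi> l i * \<psi> l j) e f l m n" unfolding w .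
  qed
  ultimately show ?thesis unfolding gram_condition_def by blast
qed

theorem theorem3:
  fixes M N K :: nat
    and \<rho> :: "nat \<Rightarrow> nat \<Rightarrow> nat \<Rightarrow> nat \<Rightarrow> complex"
    and f :: "nat \<Rightarrow> nat \<Rightarrow> complex"
  assumes "is_state M N \<rho>"
    and "is_onb N f"
    and "0 < K"
    and "\<exists>\<Phi>. is_decomp M N K \<rho> \<Phi>"
  shows "(K_separable M N K \<rho> \<longleftrightarrow>
            (\<exists>e. is_onb M e \<and> (\<forall>\<Phi>. is_decomp M N K \<rho> \<Phi> \<longrightarrow> gram_condition M N K \<Phi> e f)))
       \<and> ((\<exists>e. is_onb M e \<and> (\<forall>\<Phi>. is_decomp M N K \<rho> \<Phi> \<longrightarrow> gram_condition M N K \<Phi> e f)) \<longleftrightarrow>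
            (\<exists>e \<Phi>. is_onb M e \<and> is_decomp M N K \<rho> \<Phi> \<and> gram_condition M N K \<Phi> e f))"
proof -
  have M0: "0 < M"
  proof (rule ccontr)
    assume "\<not> 0 < M"
    then have "M = 0" by simp
    then show False using assms(1) unfolding is_state_def by simp
  qed
  have ab: "(\<exists>e. is_onb M e \<and> (\<forall>\<Phi>. is_decomp M N K \<rho> \<Phi> \<longrightarrow> gram_condition M N K \<Phi> e f))"
    if sep: "K_separable M N K \<rho>"
  proof -
    from sep obtain \<phi> \<psi> where D: "is_decomp M N K \<rho> (\<lambda>l i j. \<phi> l i * \<psi> l j)"
      unfolding K_separable_def by blast
    from generic_onb[OF M0, of K \<phi>] obtain e where e: "is_onb M e"
      and gen: "\<forall>l<K. (\<exists>i<M. \<phi> l i \<noteq> 0) \<longrightarrow> (\<forall>m<M. (\<Sum>i<M. cnj (\<phi> l i) * e m i) \<noteq> 0)" by blast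
    have G: "gram_condition M N K (\<lambda>l i j. \<phi> l i * \<psi> l j) e f" by (rule prod_gram[OF gen])
    show ?thesis using e transfer[OF D _ G] by blast
  qed
  have bc: "(\<exists>e \<Phi>. is_onb M e \<and> is_decomp M N K \<rho> \<Phi> \<and> gram_condition M N K \<Phi> e f)"
    if "\<exists>e. is_onb M e \<and> (\<forall>\<Phi>. is_decomp M N K \<rho> \<Phi> \<longrightarrow> gram_condition M N K \<Phi> e f)"
    using that assms(4) by blast
  have ca: "K_separable M N K \<rho>"
    if "\<exists>e \<Phi>. is_onb M e \<and> is_decomp M N K \<rho> \<Phi> \<and> gram_condition M N K \<Phi> e f"
    using that sep[OF _ assms(2) M0] by blast
  show ?thesis using ab bc ca by blast
qed

end
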